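(* Let $z^0\in X$ and let $\{\sigma_k\},\{\eta_k\},\{\delta_k\}$ be nonnegative sequences with $\sum_k\eta_k<\infty$, $\inf_k\sigma_k>0$, $\sup_k\delta_k<1$, and let $z^{k+1}$ be an output of IGPPAstep$(z^k,\sigma_k,\eta_k,\delta_k,\gamma,M)$ for all $k\ge0$, where $\gamma\in(0,2)$. Assume $T$ satisfies the bounded metric subregularity condition, let $\bar z^0$ be a point of $\Omega$ nearest to $z^0$ in $\|\cdot\|_M$, let $r>0$ satisfy $r\ge\|\bar z^0\|+\frac{1}{\lambda_{\min}(M)}\big(\operatorname{dist}_M(z^0,\Omega)+\gamma\sum_{k\ge0}\eta_k\big)$, and let $\kappa_r>0$ be such that $\operatorname{dist}(z,\Omega)\le\kappa_r\operatorname{dist}(0,T(z))$ whenever $\|z\|\le r$. Then for every $k\ge0$, $$\operatorname{dist}_M(z^{k+1},\Omega)\le\rho_k\operatorname{dist}_M(z^k,\Omega),\quad \rho_k:=\frac{1}{1-\delta_k}\Big(\sqrt{1-\frac{\min\{\gamma,2\gamma-\gamma^2\}\sigma_k^2}{\sigma_k^2+\kappa_r^2}}+\delta_k\Big(\frac{\min\{\gamma,1\}\kappa_r}{\sqrt{\sigma_k^2+\kappa_r^2}}+1\Big)\Big).$$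
   Context: $X$ is a finite-dimensional real Hilbert space with inner product $\langle\cdot,\cdot\rangle$ and norm $\|\cdot\|$; $T:X\rightrightarrows X$ is maximal monotone and $\Omega:=T^{-1}(0)$ is nonempty. $M$ is a self-adjoint positive definite linear operator on $X$ with $\lambda_{\max}(M)=1$; $\|z\|_M=\sqrt{\langle z,Mz\rangle}$, $\operatorname{dist}_M(z,D)=\min_{d\in D}\|d-z\|_M$, $\operatorname{dist}=\operatorname{dist}_I$. For $\sigma>0$, $\mathcal{J}_{\sigma M^{-1}T}:=(I+\sigma M^{-1}T)^{-1}$. A point $z^+$ is an output of IGPPAstep$(z,\sigma,\eta,\delta,\gamma,M)$ if $z^+=\gamma w+(1-\gamma)z$ for some $w$ with $\|w-\mathcal{J}_{\sigma M^{-1}T}(z)\|_M\le\min\{\eta,\delta\|w-z\|_M\}$. Bounded metric subregularity of $T$: for every $r>0$ there is $\kappa_r>0$ with $\operatorname{dist}(z,\Omega)\le\kappa_r\operatorname{dist}(0,T(z))$ for all $\|z\|\le r$. *)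

theory Defs
  imports "HOL-Analysis.Analysis"
begin

definition monotone_op :: "('a::real_inner \<Rightarrow> 'a set) \<Rightarrow> bool" where
  "monotone_op T \<longleftrightarrow> (\<forall>x y u v. u \<in> T x \<longrightarrow> v \<in> T y \<longrightarrow> 0 \<le> (x - y) \<bullet> (u - v))"

definition maximal_monotone :: "('a::real_inner \<Rightarrow> 'a set) \<Rightarrow> bool" where
  "maximal_monotone T \<longleftrightarrow> monotone_op T \<and>
     (\<forall>x u. (\<forall>y v. v \<in> T y \<longrightarrow> 0 \<le> (x - y) \<bullet> (u - v)) \<longrightarrow> u \<in> T x)"

definition zeros :: "('a::real_inner \<Rightarrow> 'a set) \<Rightarrow> 'a set" where
  "zeros T = {z. 0 \<in> T z}"

definition self_adjoint_pd :: "('a::real_inner \<Rightarrow> 'a) \<Rightarrow> bool" where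
  "self_adjoint_pd M \<longleftrightarrow> linear M \<and> (\<forall>x y. M x \<bullet> y = x \<bullet> M y) \<and> (\<forall>x. x \<noteq> 0 \<longrightarrow> 0 < x \<bullet> M x)"

definition eigenvalues :: "('a::real_vector \<Rightarrow> 'a) \<Rightarrow> real set" where
  "eigenvalues M = {l. \<exists>v. v \<noteq> 0 \<and> M v = l *\<^sub>R v}"

definition lambda_max :: "('a::real_vector \<Rightarrow> 'a) \<Rightarrow> real" where
  "lambda_max M = Max (eigenvalues M)"

definition lambda_min :: "('a::real_vector \<Rightarrow> 'a) \<Rightarrow> real" where
  "lambda_min M = Min (eigenvalues M)"

definition normM :: "('a::real_inner \<Rightarrow> 'a) \<Rightarrow> 'a \<Rightarrow> real" where
  "normM M z = sqrt (z \<bullet> M z)"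

definition distM :: "('a::real_inner \<Rightarrow> 'a) \<Rightarrow> 'a \<Rightarrow> 'a set \<Rightarrow> real" where
  "distM M z D = Inf ((\<lambda>d. normM M (d - z)) ` D)"

text \<open>Resolvent (I + sigma M^{-1} T)^{-1} evaluated at z.\<close>
definition resolvent :: "('a::real_inner \<Rightarrow> 'a set) \<Rightarrow> ('a \<Rightarrow> 'a) \<Rightarrow> real \<Rightarrow> 'a \<Rightarrow> 'a" where
  "resolvent T M \<sigma> z = (THE w. \<exists>v \<in> T w. z = w + \<sigma> *\<^sub>R inv M v)"

definition IGPPAstep :: "('a::real_inner \<Rightarrow> 'a set) \<Rightarrow> 'a \<Rightarrow> real \<Rightarrow> real \<Rightarrow> real \<Rightarrow> real
    \<Rightarrow> ('a \<Rightarrow> 'a) \<Rightarrow> 'a \<Rightarrow> bool" where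
  "IGPPAstep T z \<sigma> \<eta> \<delta> \<gamma> M zp \<longleftrightarrow>
     (\<exists>w. zp = \<gamma> *\<^sub>R w + (1 - \<gamma>) *\<^sub>R z \<and>
          normM M (w - resolvent T M \<sigma> z) \<le> min \<eta> (\<delta> * normM M (w - z)))"

text \<open>dist(0, T z) is +infinity when T z is empty, so the inequality is only required where T z is nonempty.\<close>
definition bounded_metric_subregular :: "('a::real_inner \<Rightarrow> 'a set) \<Rightarrow> bool" where
  "bounded_metric_subregular T \<longleftrightarrow>
     (\<forall>r>0. \<exists>\<kappa>>0. \<forall>z. norm z \<le> r \<and> T z \<noteq> {} \<longrightarrow> infdist z (zeros T) \<le> \<kappa> * infdist 0 (T z))"

end

theory Submission
  imports Defs
begin

lemma psd_cs:
  fixes A :: "'a::real_inner \<Rightarrow> 'a"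
  assumes lin: "linear A" and sym: "\<And>x y. A x \<bullet> y = x \<bullet> A y" and psd: "\<And>x. 0 \<le> x \<bullet> A x"
  shows "(x \<bullet> A y)\<^sup>2 \<le> (x \<bullet> A x) * (y \<bullet> A y)"
proof -
  define a where "a = x \<bullet> A x"
  define b where "b = x \<bullet> A y"
  define c where "c = y \<bullet> A y"
  have yx: "y \<bullet> A x = b" unfolding b_def using sym[of y x] by (simp add: inner_commute)
  have quad: "0 \<le> a + 2*t*b + t\<^sup>2*c" for t
  proof -
    have "0 \<le> (x + t *\<^sub>R y) \<bullet> A (x + t *\<^sub>R y)" by (rule psd)
    also have "\<dots> = a + 2*t*b + t\<^sup>2*c"
      using yx unfolding a_def b_def c_def
      by (simp add: linear_add[OF lin] linear_cmul[OF lin] inner_add_left inner_add_right power2_eq_square algebra_simps)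
    finally show ?thesis .
  qed
  have c0: "0 \<le> c" unfolding c_def by (rule psd)
  show ?thesis
  proof (cases "c = 0")
    case True
    have "b = 0"
    proof (rule ccontr)
      assume "b \<noteq> 0"
      have "0 \<le> a + 2*(-(a+1)/(2*b))*b + (-(a+1)/(2*b))\<^sup>2*c" by (rule quad)
      with True \<open>b \<noteq> 0\<close> show False by (simp add: field_simps)
    qed
    then show ?thesis using True unfolding a_def b_def c_def by simp
  next
    case False
    with c0 have cp: "0 < c" by simp
    have "0 \<le> a + 2*(-b/c)*b + (-b/c)\<^sup>2*c" by (rule quad)
    then have "0 \<le> a - b\<^sup>2/c" using cp by (simp add: field_simps power2_eq_square)
    then have "b\<^sup>2 \<le> a * c" using cp by (simp add: field_simps)
    then show ?thesis unfolding a_def b_def c_def .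
  qed
qed

context
  fixes M :: "'a::euclidean_space \<Rightarrow> 'a"
  assumes M: "self_adjoint_pd M"
begin

lemma M_lin: "linear M" using M unfolding self_adjoint_pd_def by blast
lemma M_sym: "M x \<bullet> y = x \<bullet> M y" using M unfolding self_adjoint_pd_def by blast
lemma M_pos: "x \<noteq> 0 \<Longrightarrow> 0 < x \<bullet> M x" using M unfolding self_adjoint_pd_def by blast
lemma M_psd: "0 \<le> x \<bullet> M x"
  using M_pos[of x] by (cases "x = 0") (auto simp: linear_0[OF M_lin])
lemma M_add: "M (x + y) = M x + M y" by (rule linear_add[OF M_lin])
lemma M_diff: "M (x - y) = M x - M y" by (rule linear_diff[OF M_lin])
lemma M_scale: "M (c *\<^sub>R x) = c *\<^sub>R M x" by (rule linear_cmul[OF M_lin])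
lemma M_0: "M 0 = 0" by (rule linear_0[OF M_lin])
lemma M_bl: "bounded_linear M" using M_lin linear_conv_bounded_linear by blast
lemma M_cont: "continuous_on S M" using M_bl linear_continuous_on by blast
lemma M_inj: "M x = M y \<Longrightarrow> x = y"
proof -
  assume "M x = M y"
  then have "M (x - y) = 0" by (simp add: M_diff)
  then have "(x - y) \<bullet> M (x - y) = 0" by simp
  then show "x = y" using M_pos[of "x - y"] by (cases "x - y = 0") auto
qed
lemma M_surj: "\<exists>x. M x = y"
proof -
  have "inj M" using M_inj by (auto simp: inj_def)
  then have "surj M" using linear_injective_imp_surjective[OF M_lin] by blast
  then show ?thesis by (metis surjD)
qed
lemma M_inv: "M (inv M y) = y" using M_surj by (metis surj_f_inv_f surj_def)
lemma M_inv2: "inv M (M x) = x" using M_inj by (meson inv_f_f injI)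

lemma M_cs: "(x \<bullet> M y)\<^sup>2 \<le> (x \<bullet> M x) * (y \<bullet> M y)"
  by (rule psd_cs[OF M_lin M_sym M_psd])

lemma q_expand: "(a + b) \<bullet> M (a + b) = a \<bullet> M a + 2 * (a \<bullet> M b) + b \<bullet> M b"
proof -
  have "b \<bullet> M a = a \<bullet> M b" using M_sym[of b a] by (simp add: inner_commute)
  then show ?thesis by (simp add: M_add inner_add_left inner_add_right)
qed

lemma q_scale: "(c *\<^sub>R a) \<bullet> M (c *\<^sub>R a) = c\<^sup>2 * (a \<bullet> M a)"
  by (simp add: M_scale power2_eq_square)

lemma normM_nonneg: "0 \<le> normM M x" unfolding normM_def using M_psd[of x] by simp
lemma normM_sq: "(normM M x)\<^sup>2 = x \<bullet> M x" unfolding normM_def using M_psd[of x] by simp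
lemma normM_scale: "normM M (c *\<^sub>R x) = \<bar>c\<bar> * normM M x"
  unfolding normM_def q_scale by (simp add: real_sqrt_mult)
lemma normM_minus: "normM M (x - y) = normM M (y - x)"
  using normM_scale[of "-1" "x - y"] by simp
lemma normM_triangle: "normM M (x + y) \<le> normM M x + normM M y"
proof -
  have cs: "x \<bullet> M y \<le> normM M x * normM M y"
  proof -
    have "(x \<bullet> M y)\<^sup>2 \<le> (normM M x * normM M y)\<^sup>2"
      using M_cs[of x y] by (simp add: power_mult_distrib normM_sq)
    then show ?thesis using normM_nonneg[of x] normM_nonneg[of y]
      by (smt (verit) real_sqrt_abs real_sqrt_le_iff mult_nonneg_nonneg)
  qed
  have "(normM M (x + y))\<^sup>2 \<le> (normM M x + normM M y)\<^sup>2"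
    using cs by (simp add: normM_sq q_expand power2_sum)
  then show ?thesis using normM_nonneg[of x] normM_nonneg[of y]
    by (meson add_nonneg_nonneg power2_le_imp_le)
qed

end

context
  fixes M :: "'a::euclidean_space \<Rightarrow> 'a"
  assumes M: "self_adjoint_pd M"
begin

lemma sphere_ne: "sphere (0::'a) 1 \<noteq> {}"
proof -
  obtain b :: 'a where "b \<in> Basis" using nonempty_Basis by blast
  then have "b \<in> sphere 0 1" by simp
  then show ?thesis by blast
qed

lemma q_cont: "continuous_on S (\<lambda>x. x \<bullet> M x)"
  using M_cont[OF M] by (intro continuous_intros) auto

lemma rayleigh_scale:
  assumes "\<forall>y\<in>sphere 0 1. P (y \<bullet> M y)" and "x \<noteq> 0"
  shows "P ((x \<bullet> M x) / (x \<bullet> x))"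
proof -
  define y where "y = (1 / norm x) *\<^sub>R x"
  have "y \<in> sphere 0 1" using assms(2) by (simp add: y_def)
  moreover have "y \<bullet> M y = (x \<bullet> M x) / (x \<bullet> x)"
    unfolding y_def q_scale[OF M] by (simp add: dot_square_norm power_divide)
  ultimately show ?thesis using assms(1) by metis
qed

lemma rayleigh_min: "\<exists>u. u \<bullet> u = 1 \<and> (\<forall>x. (u \<bullet> M u) * (x \<bullet> x) \<le> x \<bullet> M x)"
proof -
  obtain u where u: "u \<in> sphere 0 1" "\<forall>y\<in>sphere 0 1. u \<bullet> M u \<le> y \<bullet> M y"
    using continuous_attains_inf[OF compact_sphere sphere_ne q_cont] by blast
  have "(u \<bullet> M u) * (x \<bullet> x) \<le> x \<bullet> M x" for x
  proof (cases "x = 0")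
    case True then show ?thesis by (simp add: M_0[OF M])
  next
    case False
    have "u \<bullet> M u \<le> (x \<bullet> M x) / (x \<bullet> x)"
      using rayleigh_scale[of "\<lambda>t. u \<bullet> M u \<le> t", OF u(2) False] .
    then show ?thesis using False by (simp add: field_simps)
  qed
  moreover have "u \<bullet> u = 1" using u(1) by (simp add: dot_square_norm)
  ultimately show ?thesis by blast
qed

lemma rayleigh_max: "\<exists>u. u \<bullet> u = 1 \<and> (\<forall>x. x \<bullet> M x \<le> (u \<bullet> M u) * (x \<bullet> x))"
proof -
  obtain u where u: "u \<in> sphere 0 1" "\<forall>y\<in>sphere 0 1. y \<bullet> M y \<le> u \<bullet> M u"
    using continuous_attains_sup[OF compact_sphere sphere_ne q_cont] by blast
  have "x \<bullet> M x \<le> (u \<bullet> M u) * (x \<bullet> x)" for x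
  proof (cases "x = 0")
    case True then show ?thesis by (simp add: M_0[OF M])
  next
    case False
    have "(x \<bullet> M x) / (x \<bullet> x) \<le> u \<bullet> M u"
      using rayleigh_scale[of "\<lambda>t. t \<le> u \<bullet> M u", OF u(2) False] .
    then show ?thesis using False by (simp add: field_simps)
  qed
  moreover have "u \<bullet> u = 1" using u(1) by (simp add: dot_square_norm)
  ultimately show ?thesis by blast
qed

lemma psd_kernel:
  fixes A :: "'a \<Rightarrow> 'a"
  assumes lin: "linear A" and sym: "\<And>x y. A x \<bullet> y = x \<bullet> A y" and psd: "\<And>x. 0 \<le> x \<bullet> A x"
    and u: "u \<bullet> A u = 0"
  shows "A u = 0"
proof -
  have "(u \<bullet> A (A u))\<^sup>2 \<le> (u \<bullet> A u) * (A u \<bullet> A (A u))" by (rule psd_cs[OF lin sym psd])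
  then have "u \<bullet> A (A u) = 0" using u by simp
  then have "A u \<bullet> A u = 0" using sym[of u "A u"] by simp
  then show ?thesis by simp
qed

lemma eig_min:
  assumes "u \<bullet> u = 1" "\<forall>x. (u \<bullet> M u) * (x \<bullet> x) \<le> x \<bullet> M x"
  shows "(u \<bullet> M u) \<in> eigenvalues M"
proof -
  define \<mu> where "\<mu> = u \<bullet> M u"
  define A where "A = (\<lambda>x. M x - \<mu> *\<^sub>R x)"
  have lin: "linear A" unfolding A_def by (rule linearI) (simp_all add: M_add[OF M] M_scale[OF M] algebra_simps)
  have "A u = 0"
  proof (rule psd_kernel[OF lin])
    show "A x \<bullet> y = x \<bullet> A y" for x y
      unfolding A_def using M_sym[OF M, of y x] by (simp add: inner_diff_left inner_diff_right inner_commute)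
    show "0 \<le> x \<bullet> A x" for x
      using assms(2) unfolding A_def \<mu>_def by (simp add: inner_diff_right)
    show "u \<bullet> A u = 0" unfolding A_def \<mu>_def using assms(1) by (simp add: inner_diff_right)
  qed
  then have "M u = \<mu> *\<^sub>R u" unfolding A_def by simp
  moreover have "u \<noteq> 0" using assms(1) by auto
  ultimately show ?thesis unfolding eigenvalues_def \<mu>_def by blast
qed

lemma eig_max:
  assumes "u \<bullet> u = 1" "\<forall>x. x \<bullet> M x \<le> (u \<bullet> M u) * (x \<bullet> x)"
  shows "(u \<bullet> M u) \<in> eigenvalues M"
proof -
  define \<mu> where "\<mu> = u \<bullet> M u"
  define A where "A = (\<lambda>x. \<mu> *\<^sub>R x - M x)"
  have lin: "linear A" unfolding A_def by (rule linearI) (simp_all add: M_add[OF M] M_scale[OF M] algebra_simps)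
  have "A u = 0"
  proof (rule psd_kernel[OF lin])
    show "A x \<bullet> y = x \<bullet> A y" for x y
      unfolding A_def using M_sym[OF M, of y x] by (simp add: inner_diff_left inner_diff_right inner_commute)
    show "0 \<le> x \<bullet> A x" for x
      using assms(2) unfolding A_def \<mu>_def by (simp add: inner_diff_right)
    show "u \<bullet> A u = 0" unfolding A_def \<mu>_def using assms(1) by (simp add: inner_diff_right)
  qed
  then have "M u = \<mu> *\<^sub>R u" unfolding A_def by simp
  moreover have "u \<noteq> 0" using assms(1) by auto
  ultimately show ?thesis unfolding eigenvalues_def \<mu>_def by blast
qed

lemma eig_finite: "finite (eigenvalues M)"
proof -
  define ev where "ev l = (SOME v. v \<noteq> 0 \<and> M v = l *\<^sub>R v)" for l
  have ev: "ev l \<noteq> 0 \<and> M (ev l) = l *\<^sub>R ev l" if "l \<in> eigenvalues M" for l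
  proof -
    have "\<exists>v. v \<noteq> 0 \<and> M v = l *\<^sub>R v" using that unfolding eigenvalues_def by blast
    then show ?thesis unfolding ev_def by (rule someI_ex)
  qed
  have inj: "inj_on ev (eigenvalues M)"
  proof (rule inj_onI)
    fix l1 l2 assume l: "l1 \<in> eigenvalues M" "l2 \<in> eigenvalues M" "ev l1 = ev l2"
    then have "l1 *\<^sub>R ev l1 = l2 *\<^sub>R ev l1" using ev[OF l(1)] ev[OF l(2)] by metis
    then show "l1 = l2" using ev[OF l(1)] by simp
  qed
  have po: "pairwise orthogonal (ev ` eigenvalues M)"
  proof (rule pairwiseI)
    fix a b assume ab: "a \<in> ev ` eigenvalues M" "b \<in> ev ` eigenvalues M" "a \<noteq> b"
    then obtain l1 l2 where l: "l1 \<in> eigenvalues M" "l2 \<in> eigenvalues M" "a = ev l1" "b = ev l2" by blast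
    have "l1 \<noteq> l2" using ab(3) l(3,4) by auto
    have "l1 * (a \<bullet> b) = M a \<bullet> b" using ev[OF l(1)] l(3) by simp
    also have "\<dots> = a \<bullet> M b" by (rule M_sym[OF M])
    also have "\<dots> = l2 * (a \<bullet> b)" using ev[OF l(2)] l(4) by simp
    finally have "(l1 - l2) * (a \<bullet> b) = 0" by (simp add: algebra_simps)
    then show "orthogonal a b" using \<open>l1 \<noteq> l2\<close> by (simp add: orthogonal_def)
  qed
  have "0 \<notin> ev ` eigenvalues M" using ev by auto
  then have "independent (ev ` eigenvalues M)" using pairwise_orthogonal_independent po by blast
  then have "finite (ev ` eigenvalues M)" using independent_bound by blast
  then show ?thesis using finite_imageD inj by blast
qed

lemma eig_pos: "l \<in> eigenvalues M \<Longrightarrow> 0 < l"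
proof -
  assume "l \<in> eigenvalues M"
  then obtain v where v: "v \<noteq> 0" "M v = l *\<^sub>R v" unfolding eigenvalues_def by blast
  have "0 < v \<bullet> M v" using M_pos[OF M v(1)] .
  then have "0 < l * (v \<bullet> v)" using v(2) by simp
  moreover have "0 < v \<bullet> v" using v(1) by simp
  ultimately show "0 < l" using zero_less_mult_pos2 by blast
qed

lemma lambda_facts:
  assumes "lambda_max M = 1"
  shows "0 < lambda_min M" "lambda_min M \<le> 1"
    "\<And>x. lambda_min M * (x \<bullet> x) \<le> x \<bullet> M x" "\<And>x. x \<bullet> M x \<le> x \<bullet> x"
proof -
  obtain u where u: "u \<bullet> u = 1" "\<forall>x. (u \<bullet> M u) * (x \<bullet> x) \<le> x \<bullet> M x" using rayleigh_min by blast
  obtain w where w: "w \<bullet> w = 1" "\<forall>x. x \<bullet> M x \<le> (w \<bullet> M w) * (x \<bullet> x)" using rayleigh_max by blast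
  have ue: "u \<bullet> M u \<in> eigenvalues M" using eig_min[OF u] .
  have we: "w \<bullet> M w \<in> eigenvalues M" using eig_max[OF w] .
  have ne: "eigenvalues M \<noteq> {}" using ue by blast
  have "lambda_min M \<in> eigenvalues M" unfolding lambda_min_def using Min_in[OF eig_finite ne] .
  then show "0 < lambda_min M" by (rule eig_pos)
  have lmin: "lambda_min M \<le> u \<bullet> M u" unfolding lambda_min_def using Min_le[OF eig_finite ue] .
  have wle: "w \<bullet> M w \<le> 1" using Max_ge[OF eig_finite we] assms unfolding lambda_max_def by simp
  show "x \<bullet> M x \<le> x \<bullet> x" for x
  proof -
    have "(w \<bullet> M w) * (x \<bullet> x) \<le> 1 * (x \<bullet> x)" using wle by (intro mult_right_mono) auto
    then show ?thesis using w(2) by (metis mult_1 order_trans)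
  qed
  show "lambda_min M * (x \<bullet> x) \<le> x \<bullet> M x" for x
  proof -
    have "lambda_min M * (x \<bullet> x) \<le> (u \<bullet> M u) * (x \<bullet> x)" using lmin by (intro mult_right_mono) auto
    then show ?thesis using u(2) by (metis order_trans)
  qed
  have "u \<bullet> M u \<le> u \<bullet> u" using w(2)[rule_format, of u] wle u(1) by simp
  then show "lambda_min M \<le> 1" using lmin u(1) by simp
qed

end

lemma mono_sum:
  fixes Y W :: "'i \<Rightarrow> 'a::real_inner" and \<beta> :: "'i \<Rightarrow> real"
  assumes fin: "finite V" and bnn: "\<And>a. a \<in> V \<Longrightarrow> 0 \<le> \<beta> a" and bs: "(\<Sum>a\<in>V. \<beta> a) = 1"
    and mono: "\<And>a b. a \<in> V \<Longrightarrow> b \<in> V \<Longrightarrow> 0 \<le> (Y a - Y b) \<bullet> (W a - W b)"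
    and x: "x = (\<Sum>a\<in>V. \<beta> a *\<^sub>R Y a)"
  shows "0 \<le> (\<Sum>a\<in>V. \<beta> a * ((F - W a) \<bullet> (x - Y a)))"
proof -
  have xa: "x - Y a = (\<Sum>c\<in>V. \<beta> c *\<^sub>R (Y c - Y a))" for a
  proof -
    have "(\<Sum>c\<in>V. \<beta> c *\<^sub>R (Y c - Y a)) = x - (\<Sum>c\<in>V. \<beta> c) *\<^sub>R Y a"
      unfolding x by (simp add: scaleR_diff_right sum_subtractf scaleR_sum_left)
    then show ?thesis using bs by simp
  qed
  have s1: "(\<Sum>a\<in>V. \<beta> a *\<^sub>R (x - Y a)) = 0"
  proof -
    have "(\<Sum>a\<in>V. \<beta> a *\<^sub>R (x - Y a)) = (\<Sum>a\<in>V. \<beta> a) *\<^sub>R x - x"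
      unfolding scaleR_diff_right sum_subtractf scaleR_sum_left[symmetric] x[symmetric] ..
    then show ?thesis using bs by simp
  qed
  define P where "P = (\<Sum>a\<in>V. \<Sum>c\<in>V. \<beta> a * \<beta> c * (W a \<bullet> (Y c - Y a)))"
  define P' where "P' = (\<Sum>a\<in>V. \<Sum>c\<in>V. \<beta> a * \<beta> c * (W c \<bullet> (Y a - Y c)))"
  have PP: "P = P'" unfolding P_def P'_def
    by (subst sum.swap) (simp add: mult.commute mult.left_commute)
  have "P + P' = (\<Sum>a\<in>V. \<Sum>c\<in>V. \<beta> a * \<beta> c * (- ((Y a - Y c) \<bullet> (W a - W c))))"
    unfolding P_def P'_def sum.distrib[symmetric]
    by (intro sum.cong refl) (simp add: algebra_simps inner_diff_left inner_diff_right inner_commute)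
  also have "\<dots> \<le> 0"
    by (intro sum_nonpos) (simp add: bnn mono mult_nonneg_nonneg)
  finally have Pn: "P \<le> 0" using PP by simp
  have "(\<Sum>a\<in>V. \<beta> a * ((F - W a) \<bullet> (x - Y a)))
      = F \<bullet> (\<Sum>a\<in>V. \<beta> a *\<^sub>R (x - Y a)) - (\<Sum>a\<in>V. \<beta> a * (W a \<bullet> (x - Y a)))"
    by (simp add: inner_sum_right inner_diff_left algebra_simps sum_subtractf sum.distrib)
  also have "(\<Sum>a\<in>V. \<beta> a * (W a \<bullet> (x - Y a))) = P"
    unfolding P_def xa by (simp add: inner_sum_right sum_distrib_left mult.assoc)
  finally show ?thesis using s1 Pn by simp
qed

lemma sum_V: "finite (Basis::'a::euclidean_space set) \<and> (0::'a) \<notin> Basis"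
  by (simp add: zero_not_in_Basis)

lemma sum_insert0: "(\<Sum>a\<in>insert (0::'a::euclidean_space) Basis. h a) = h 0 + (\<Sum>b\<in>Basis. h b)"
  by (simp add: sum.insert zero_not_in_Basis)

lemma inner_basis_sum: "b \<in> Basis \<Longrightarrow> (\<Sum>b'\<in>Basis. f b' *\<^sub>R b') \<bullet> (b::'a::euclidean_space) = f b"
  by (simp add: inner_sum_left inner_Basis if_distrib[of "\<lambda>t. f _ * t"] sum.delta cong: if_cong)

lemma core_brouwer:
  fixes L :: "'a::euclidean_space \<Rightarrow> 'a" and c :: 'a and Y W :: "'a \<Rightarrow> 'a"
  assumes lin: "linear L"
    and mono: "\<And>a b. a \<in> insert 0 Basis \<Longrightarrow> b \<in> insert 0 Basis \<Longrightarrow> 0 \<le> (Y a - Y b) \<bullet> (W a - W b)"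
  shows "\<exists>x. \<forall>a\<in>insert 0 Basis. 0 \<le> (c - L x - W a) \<bullet> (x - Y a)"
proof -
  define V :: "'a set" where "V = insert 0 Basis"
  have finV: "finite V" unfolding V_def by simp
  have Lc: "continuous_on A L" for A
    using lin linear_conv_bounded_linear linear_continuous_on by blast
  define beta where "beta s a = (if a = 0 then 1 - (\<Sum>b\<in>Basis. s \<bullet> b) else s \<bullet> a)" for s a :: 'a
  define X where "X s = (1 - (\<Sum>b\<in>Basis. s \<bullet> b)) *\<^sub>R Y 0 + (\<Sum>b\<in>Basis. (s \<bullet> b) *\<^sub>R Y b)" for s
  have X_eq: "X s = (\<Sum>a\<in>V. beta s a *\<^sub>R Y a)" for s
  proof -
    have "(\<Sum>b\<in>Basis. beta s b *\<^sub>R Y b) = (\<Sum>b\<in>Basis. (s \<bullet> b) *\<^sub>R Y b)"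
      by (intro sum.cong refl) (auto simp: beta_def zero_not_in_Basis)
    then show ?thesis unfolding V_def sum_insert0 X_def by (simp add: beta_def)
  qed
  have beta_sum: "(\<Sum>a\<in>V. beta s a) = 1" for s
  proof -
    have "(\<Sum>b\<in>Basis. beta s b) = (\<Sum>b\<in>Basis. s \<bullet> b)"
      by (intro sum.cong refl) (auto simp: beta_def zero_not_in_Basis)
    then show ?thesis unfolding V_def sum_insert0 by (simp add: beta_def)
  qed
  define g where "g a s = (c - L (X s) - W a) \<bullet> (X s - Y a)" for a s
  define m where "m a s = max 0 (- g a s)" for a s
  define D where "D s = 1 + (\<Sum>a\<in>V. m a s)" for s
  define \<Phi> where "\<Phi> s = (\<Sum>b\<in>Basis. ((s \<bullet> b + m b s) / D s) *\<^sub>R b)" for s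
  define S where "S = {s::'a. (\<forall>b\<in>Basis. 0 \<le> s \<bullet> b) \<and> (\<Sum>b\<in>Basis. s \<bullet> b) \<le> 1}"
  have m_nn: "0 \<le> m a s" for a s unfolding m_def by simp
  have msum_nn: "0 \<le> (\<Sum>a\<in>V. m a s)" for s by (intro sum_nonneg m_nn)
  have D_pos: "0 < D s" for s unfolding D_def using msum_nn[of s] by simp
  have Dnz: "D s \<noteq> 0" for s using D_pos[of s] by simp
  have Phi_b: "\<Phi> s \<bullet> b = (s \<bullet> b + m b s) / D s" if "b \<in> Basis" for s b
    unfolding \<Phi>_def using inner_basis_sum[OF that] .
  have beta_nn: "0 \<le> beta s a" if "s \<in> S" "a \<in> V" for s a
    using that unfolding S_def V_def beta_def by auto
  have Xc: "continuous_on A X" for A unfolding X_def by (intro continuous_intros)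
  have gc: "continuous_on A (g a)" for a A unfolding g_def
    by (intro continuous_intros Xc continuous_on_compose2[OF Lc Xc]) auto
  have mc: "continuous_on A (m a)" for a A unfolding m_def by (intro continuous_intros gc)
  have Dc: "continuous_on A D" for A unfolding D_def by (intro continuous_intros mc)
  have Phic: "continuous_on S \<Phi>" unfolding \<Phi>_def
    by (intro continuous_intros mc Dc) (simp_all add: Dnz)
  have S_closed: "closed S"
  proof -
    have "S = (\<Inter>b\<in>Basis. {s. 0 \<le> s \<bullet> b}) \<inter> {s. (\<Sum>b\<in>Basis. s \<bullet> b) \<le> 1}"
      unfolding S_def by auto
    also have "closed \<dots>"
      by (intro closed_Int closed_INT ballI closed_Collect_le continuous_intros)
    finally show ?thesis .
  qed
  have S_bounded: "bounded S"
  proof -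
    have "norm s \<le> 1" if "s \<in> S" for s
    proof -
      have "norm s \<le> (\<Sum>b\<in>Basis. \<bar>s \<bullet> b\<bar>)" by (rule norm_le_l1)
      also have "\<dots> = (\<Sum>b\<in>Basis. s \<bullet> b)" using that unfolding S_def by (intro sum.cong) auto
      also have "\<dots> \<le> 1" using that unfolding S_def by auto
      finally show ?thesis .
    qed
    then show ?thesis unfolding bounded_iff by blast
  qed
  have S_convex: "convex S"
  proof (rule convexI)
    fix s t :: 'a and u v :: real assume st: "s \<in> S" "t \<in> S" "0 \<le> u" "0 \<le> v" "u + v = 1"
    have "\<forall>b\<in>Basis. 0 \<le> (u *\<^sub>R s + v *\<^sub>R t) \<bullet> b"
      using st unfolding S_def by (auto simp: inner_add_left)
    moreover have "(\<Sum>b\<in>Basis. (u *\<^sub>R s + v *\<^sub>R t) \<bullet> b) = u * (\<Sum>b\<in>Basis. s \<bullet> b) + v * (\<Sum>b\<in>Basis. t \<bullet> b)"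
      by (simp add: inner_add_left sum.distrib sum_distrib_left)
    moreover have "u * (\<Sum>b\<in>Basis. s \<bullet> b) + v * (\<Sum>b\<in>Basis. t \<bullet> b) \<le> u * 1 + v * 1"
      using st unfolding S_def by (intro add_mono mult_left_mono) auto
    ultimately show "u *\<^sub>R s + v *\<^sub>R t \<in> S" unfolding S_def using st(5) by auto
  qed
  have S_ne: "S \<noteq> {}" unfolding S_def by (auto intro!: exI[of _ 0])
  have Phi_S: "\<Phi> \<in> S \<rightarrow> S"
  proof
    fix s assume s: "s \<in> S"
    have "\<forall>b\<in>Basis. 0 \<le> \<Phi> s \<bullet> b"
      using s D_pos[of s] m_nn unfolding S_def by (auto simp: Phi_b)
    moreover have "(\<Sum>b\<in>Basis. \<Phi> s \<bullet> b) \<le> 1"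
    proof -
      have "(\<Sum>b\<in>Basis. \<Phi> s \<bullet> b) = ((\<Sum>b\<in>Basis. s \<bullet> b) + (\<Sum>b\<in>Basis. m b s)) / D s"
        by (simp add: Phi_b sum_divide_distrib[symmetric] sum.distrib)
      also have "\<dots> \<le> 1"
      proof -
        have "(\<Sum>b\<in>Basis. s \<bullet> b) \<le> 1" using s unfolding S_def by auto
        moreover have "D s = 1 + m 0 s + (\<Sum>b\<in>Basis. m b s)" unfolding D_def V_def sum_insert0 by simp
        ultimately show ?thesis using D_pos[of s] m_nn[of 0 s] by (simp add: divide_le_eq)
      qed
      finally show ?thesis .
    qed
    ultimately show "\<Phi> s \<in> S" unfolding S_def by blast
  qed
  obtain s where s: "s \<in> S" "\<Phi> s = s"
    using brouwer[OF compact_eq_bounded_closed[THEN iffD2, OF conjI[OF S_bounded S_closed]] S_convex S_ne Phic Phi_S] by blast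
  define Ms where "Ms = (\<Sum>a\<in>V. m a s)"
  have Ds: "D s = 1 + Ms" unfolding D_def Ms_def ..
  have fb: "(s \<bullet> b) * Ms = m b s" if "b \<in> Basis" for b
  proof -
    have "s \<bullet> b = (s \<bullet> b + m b s) / D s" using Phi_b[OF that, of s] s(2) by simp
    then have "(s \<bullet> b) * D s = s \<bullet> b + m b s" using D_pos[of s] by (simp add: field_simps)
    then show ?thesis unfolding Ds by (simp add: algebra_simps)
  qed
  have fV: "beta s a * Ms = m a s" if "a \<in> V" for a
  proof (cases "a = 0")
    case False
    then have "a \<in> Basis" using that unfolding V_def by auto
    then show ?thesis using fb False unfolding beta_def by simp
  next
    case True
    have "(\<Sum>b\<in>Basis. s \<bullet> b) * Ms = (\<Sum>b\<in>Basis. m b s)"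
      unfolding sum_distrib_right by (intro sum.cong refl fb)
    moreover have "Ms = m 0 s + (\<Sum>b\<in>Basis. m b s)" unfolding Ms_def V_def sum_insert0 ..
    ultimately show ?thesis using True unfolding beta_def by (simp add: algebra_simps)
  qed
  have key: "0 \<le> (\<Sum>a\<in>V. beta s a * g a s)"
    unfolding g_def
  proof (rule mono_sum[where V=V and \<beta>="beta s" and Y=Y and W=W and x="X s" and F="c - L (X s)"])
    show "finite V" by (rule finV)
    show "\<And>a. a \<in> V \<Longrightarrow> 0 \<le> beta s a" using beta_nn[OF s(1)] .
    show "(\<Sum>a\<in>V. beta s a) = 1" by (rule beta_sum)
    show "\<And>a b. a \<in> V \<Longrightarrow> b \<in> V \<Longrightarrow> 0 \<le> (Y a - Y b) \<bullet> (W a - W b)"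
      unfolding V_def by (rule mono)
    show "X s = (\<Sum>a\<in>V. beta s a *\<^sub>R Y a)" by (rule X_eq)
  qed
  have Ms0: "Ms = 0"
  proof (rule ccontr)
    assume "Ms \<noteq> 0"
    then have Mp: "0 < Ms" using msum_nn[of s] unfolding Ms_def by simp
    have le: "beta s a * g a s \<le> - (Ms * (beta s a)\<^sup>2)" if "a \<in> V" for a
    proof (cases "beta s a = 0")
      case True then show ?thesis by simp
    next
      case False
      then have bp: "0 < beta s a" using beta_nn[OF s(1) that] by simp
      then have "0 < beta s a * Ms" using Mp by simp
      then have "0 < m a s" using fV[OF that] by simp
      then have "m a s = - g a s" by (auto simp: m_def max_def split: if_splits)
      then have "g a s = - (beta s a * Ms)" using fV[OF that] by simp
      then show ?thesis by (simp add: power2_eq_square algebra_simps)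
    qed
    have "\<exists>a\<in>V. beta s a \<noteq> 0"
    proof (rule ccontr)
      assume "\<not> ?thesis"
      then have "(\<Sum>a\<in>V. beta s a) = 0" by simp
      then show False using beta_sum[of s] by simp
    qed
    then obtain a0 where a0: "a0 \<in> V" "beta s a0 \<noteq> 0" by blast
    have "(\<Sum>a\<in>V. beta s a * g a s) \<le> (\<Sum>a\<in>V. - (Ms * (beta s a)\<^sup>2))"
      by (intro sum_mono le)
    also have "\<dots> < 0"
    proof -
      have "0 < (\<Sum>a\<in>V. Ms * (beta s a)\<^sup>2)"
      proof (rule sum_pos2[OF finV a0(1)])
        show "0 < Ms * (beta s a0)\<^sup>2" using Mp a0(2) by simp
        show "\<And>i. i \<in> V \<Longrightarrow> 0 \<le> Ms * (beta s i)\<^sup>2" using Mp by simp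
      qed
      then show ?thesis by (simp add: sum_negf)
    qed
    finally show False using key by simp
  qed
  have "\<forall>a\<in>V. m a s = 0"
    using Ms0 unfolding Ms_def by (subst (asm) sum_nonneg_eq_0_iff[OF finV]) (auto simp: m_nn)
  then have "\<forall>a\<in>V. 0 \<le> g a s" by (auto simp: m_def max_def split: if_splits)
  then show ?thesis unfolding g_def V_def by blast
qed

lemma K_convex_ineq:
  fixes L :: "'a::real_inner \<Rightarrow> 'a"
  assumes lin: "linear L" and sym: "\<And>x y. L x \<bullet> y = x \<bullet> L y" and v: "v = 1 - u"
  shows "(c - L (u *\<^sub>R x1 + v *\<^sub>R x2) - w) \<bullet> (u *\<^sub>R x1 + v *\<^sub>R x2 - y)
    = u * ((c - L x1 - w) \<bullet> (x1 - y)) + v * ((c - L x2 - w) \<bullet> (x2 - y))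
      + u * v * ((x1 - x2) \<bullet> L (x1 - x2))"
proof -
  have s21: "L x2 \<bullet> x1 = L x1 \<bullet> x2" using sym[of x2 x1] by (simp add: inner_commute)
  show ?thesis
    unfolding v
    by (simp add: linear_add[OF lin] linear_cmul[OF lin] linear_diff[OF lin]
        inner_add_left inner_add_right inner_diff_left inner_diff_right sym[symmetric] s21
        algebra_simps power2_eq_square inner_commute[of x1 "L x1"] inner_commute[of x2 "L x2"]
        inner_commute[of x1 "L x2"] inner_commute[of x2 "L x1"])
qed

lemma minty:
  fixes T :: "'a::euclidean_space \<Rightarrow> 'a set" and L :: "'a \<Rightarrow> 'a" and c :: 'a and \<mu> :: real
  assumes mm: "maximal_monotone T" and ne: "v0 \<in> T y0"
    and lin: "linear L" and sym: "\<And>x y. L x \<bullet> y = x \<bullet> L y"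
    and mu: "0 < \<mu>" and coer: "\<And>x. \<mu> * (x \<bullet> x) \<le> x \<bullet> L x"
  shows "\<exists>x. c - L x \<in> T x"
proof -
  have mono: "\<And>x y u v. u \<in> T x \<Longrightarrow> v \<in> T y \<Longrightarrow> 0 \<le> (x - y) \<bullet> (u - v)"
    using mm unfolding maximal_monotone_def monotone_op_def by blast
  have Lc: "continuous_on A L" for A
    using lin linear_conv_bounded_linear linear_continuous_on by blast
  define G where "G = {(y, v). v \<in> T y}"
  define K where "K p = {x. 0 \<le> (c - L x - snd p) \<bullet> (x - fst p)}" for p
  have Kclosed: "closed (K p)" for p
    unfolding K_def
    by (intro closed_Collect_le continuous_intros continuous_on_compose2[OF Lc]) auto
  have Kconvex: "convex (K p)" for p
  proof (rule convexI)
    fix x1 x2 u v assume h: "x1 \<in> K p" "x2 \<in> K p" "0 \<le> u" "0 \<le> (v::real)" "u + v = 1"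
    have eq: "(c - L (u *\<^sub>R x1 + v *\<^sub>R x2) - snd p) \<bullet> (u *\<^sub>R x1 + v *\<^sub>R x2 - fst p)
      = u * ((c - L x1 - snd p) \<bullet> (x1 - fst p)) + v * ((c - L x2 - snd p) \<bullet> (x2 - fst p))
        + u * v * ((x1 - x2) \<bullet> L (x1 - x2))"
      by (rule K_convex_ineq[OF lin sym]) (use h in simp)
    have "0 \<le> (x1 - x2) \<bullet> L (x1 - x2)" using coer[of "x1 - x2"] mu
      by (meson inner_ge_zero mult_nonneg_nonneg less_imp_le order_trans)
    then have "0 \<le> u * ((c - L x1 - snd p) \<bullet> (x1 - fst p)) + v * ((c - L x2 - snd p) \<bullet> (x2 - fst p))
        + u * v * ((x1 - x2) \<bullet> L (x1 - x2))"
      using h unfolding K_def by (intro add_nonneg_nonneg mult_nonneg_nonneg) auto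
    then show "u *\<^sub>R x1 + v *\<^sub>R x2 \<in> K p" unfolding K_def using eq by simp
  qed
  have Kbounded: "bounded (K (y0, v0))"
  proof -
    define a where "a = norm (c - v0) + norm (L y0)"
    define b where "b = norm (c - v0) * norm y0"
    have "norm x \<le> (a + b) / \<mu> + 1" if "x \<in> K (y0, v0)" for x
    proof -
      have h0: "0 \<le> (c - L x - v0) \<bullet> (x - y0)" using that unfolding K_def by simp
      have eqn: "(c - L x - v0) \<bullet> (x - y0) = (c - v0) \<bullet> (x - y0) - x \<bullet> L x + x \<bullet> L y0"
        using sym[of x y0] sym[of x x] by (simp add: inner_diff_left inner_diff_right algebra_simps inner_commute)
      have t1: "(c - v0) \<bullet> (x - y0) \<le> norm (c - v0) * (norm x + norm y0)"
        by (metis Cauchy_Schwarz_ineq2 abs_le_D1 norm_triangle_ineq4 mult_left_mono norm_ge_zero order_trans)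
      have t2: "x \<bullet> L y0 \<le> norm x * norm (L y0)" by (metis Cauchy_Schwarz_ineq2 abs_le_D1)
      have t3: "\<mu> * (norm x)\<^sup>2 \<le> x \<bullet> L x" using coer[of x] by (simp add: dot_square_norm)
      have main: "\<mu> * (norm x)\<^sup>2 \<le> a * norm x + b"
        using h0 eqn t1 t2 t3 unfolding a_def b_def by (simp add: algebra_simps)
      have a0: "0 \<le> a" "0 \<le> b" unfolding a_def b_def by simp_all
      show ?thesis
      proof (cases "norm x \<le> 1")
        case True
        have "0 \<le> (a + b) / \<mu>" using a0 mu by simp
        then show ?thesis using True by simp
      next
        case False
        then have "b \<le> b * norm x" using a0 by (simp add: mult_le_cancel_left1)
        then have "\<mu> * (norm x)\<^sup>2 \<le> (a + b) * norm x" using main by (simp add: algebra_simps)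
        then have "(\<mu> * norm x) * norm x \<le> (a + b) * norm x" by (simp add: power2_eq_square mult.assoc)
        then have "\<mu> * norm x \<le> a + b" by (rule mult_right_le_imp_le) (use False in auto)
        then have "norm x \<le> (a + b) / \<mu>" using mu by (simp add: field_simps)
        then show ?thesis by simp
      qed
    qed
    then show ?thesis unfolding bounded_iff by blast
  qed
  have core2: "\<Inter>F \<noteq> {}" if F: "finite F" "F \<subseteq> K ` G" "card F \<le> DIM('a) + 1" for F
  proof (cases "F = {}")
    case True then show ?thesis by simp
  next
    case False
    define V :: "'a set" where "V = insert 0 Basis"
    have cardV: "card V = DIM('a) + 1" unfolding V_def by (simp add: zero_not_in_Basis)
    obtain f where f: "f ` F \<subseteq> V" "inj_on f F"
      using card_le_inj[OF F(1), of V] cardV F(3) unfolding V_def by auto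
    have "\<forall>A\<in>F. \<exists>p\<in>G. A = K p" using F(2) by blast
    then obtain P where P: "\<And>A. A \<in> F \<Longrightarrow> P A \<in> G \<and> A = K (P A)" by metis
    obtain A0 where A0: "A0 \<in> F" using False by blast
    define h where "h a = (if a \<in> f ` F then inv_into F f a else A0)" for a
    have hF: "h a \<in> F" for a unfolding h_def using A0 by (auto intro: inv_into_into)
    have hf: "h (f A) = A" if "A \<in> F" for A unfolding h_def using that f(2) by auto
    define Y where "Y a = fst (P (h a))" for a
    define W where "W a = snd (P (h a))" for a
    have WY: "W a \<in> T (Y a)" for a using P[OF hF[of a]] unfolding G_def W_def Y_def by auto
    obtain x where x: "\<forall>a\<in>insert 0 Basis. 0 \<le> (c - L x - W a) \<bullet> (x - Y a)"
      using core_brouwer[OF lin, of Y W c] mono[OF WY WY] by blast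
    have "x \<in> A" if "A \<in> F" for A
    proof -
      have "f A \<in> V" using f(1) that by blast
      then have "0 \<le> (c - L x - W (f A)) \<bullet> (x - Y (f A))" using x unfolding V_def by blast
      then have "x \<in> K (P (h (f A)))" unfolding K_def W_def Y_def by simp
      then show ?thesis using hf[OF that] P[OF that] by simp
    qed
    then show ?thesis by blast
  qed
  have fip: "\<Inter>F \<noteq> {}" if F: "finite F" "F \<subseteq> K ` G" for F
  proof (cases "card F \<ge> DIM('a) + 1")
    case True
    show ?thesis
    proof (rule Helly[OF True])
      show "\<forall>s\<in>F. convex s" using F(2) Kconvex by blast
      show "\<And>t. t \<subseteq> F \<Longrightarrow> card t = DIM('a) + 1 \<Longrightarrow> \<Inter>t \<noteq> {}"
      proof -
        fix t assume t: "t \<subseteq> F" "card t = DIM('a) + 1"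
        have "finite t" using t(1) F(1) finite_subset by blast
        moreover have "t \<subseteq> K ` G" using t(1) F(2) by blast
        ultimately show "\<Inter>t \<noteq> {}" using core2 t(2) by simp
      qed
    qed
  next
    case False
    then show ?thesis using core2 F by simp
  qed
  have "\<Inter>(K ` G) \<noteq> {}"
  proof (rule closed_fip_Heine_Borel[of "K (y0, v0)"])
    show "K (y0, v0) \<in> K ` G" using ne unfolding G_def by blast
    show "bounded (K (y0, v0))" by (rule Kbounded)
    show "\<And>T. T \<in> K ` G \<Longrightarrow> closed T" using Kclosed by blast
    show "\<And>F'. finite F' \<Longrightarrow> F' \<subseteq> K ` G \<Longrightarrow> \<Inter> F' \<noteq> {}" by (rule fip)
  qed
  then obtain x where x: "x \<in> \<Inter>(K ` G)" by blast
  have "\<forall>y v. v \<in> T y \<longrightarrow> 0 \<le> (x - y) \<bullet> ((c - L x) - v)"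
  proof (intro allI impI)
    fix y v assume "v \<in> T y"
    then have "x \<in> K (y, v)" using x unfolding G_def by blast
    then show "0 \<le> (x - y) \<bullet> ((c - L x) - v)" unfolding K_def by (simp add: inner_commute)
  qed
  then have "c - L x \<in> T x" using mm unfolding maximal_monotone_def by blast
  then show ?thesis by blast
qed

lemma resolvent_prop:
  fixes T :: "'a::euclidean_space \<Rightarrow> 'a set" and M :: "'a \<Rightarrow> 'a"
  assumes mm: "maximal_monotone T" and ne: "zeros T \<noteq> {}" and M: "self_adjoint_pd M" and sp: "0 < \<sigma>"
  shows "\<exists>v\<in>T (resolvent T M \<sigma> z). M (z - resolvent T M \<sigma> z) = \<sigma> *\<^sub>R v"
proof -
  have mono: "\<And>x y u v. u \<in> T x \<Longrightarrow> v \<in> T y \<Longrightarrow> 0 \<le> (x - y) \<bullet> (u - v)"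
    using mm unfolding maximal_monotone_def monotone_op_def by blast
  let ?P = "\<lambda>w. \<exists>v \<in> T w. z = w + \<sigma> *\<^sub>R inv M v"
  have PM: "M (z - w) = \<sigma> *\<^sub>R v" if "v \<in> T w" "z = w + \<sigma> *\<^sub>R inv M v" for w v
  proof -
    have "z - w = \<sigma> *\<^sub>R inv M v" using that by simp
    then show ?thesis by (simp add: M_scale[OF M] M_inv[OF M])
  qed
  have ex: "\<exists>w. ?P w"
  proof -
    obtain y0 where y0: "0 \<in> T y0" using ne unfolding zeros_def by blast
    obtain u where u: "u \<bullet> u = 1" "\<forall>x. (u \<bullet> M u) * (x \<bullet> x) \<le> x \<bullet> M x" using rayleigh_min[OF M] by blast
    have "u \<noteq> 0" using u(1) by auto
    then have up: "0 < u \<bullet> M u" using M_pos[OF M, of u] by blast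
    define L where "L x = (1 / \<sigma>) *\<^sub>R M x" for x
    have lin: "linear L" unfolding L_def by (rule linearI) (simp_all add: M_add[OF M] M_scale[OF M] algebra_simps)
    have sym: "L x \<bullet> y = x \<bullet> L y" for x y unfolding L_def by (simp add: M_sym[OF M])
    have coer: "((u \<bullet> M u) / \<sigma>) * (x \<bullet> x) \<le> x \<bullet> L x" for x
      using u(2)[rule_format, of x] sp unfolding L_def by (simp add: divide_right_mono)
    obtain w where w: "(1 / \<sigma>) *\<^sub>R M z - L w \<in> T w"
      using minty[OF mm y0 lin sym _ coer] up sp by auto
    define v where "v = (1 / \<sigma>) *\<^sub>R M z - L w"
    have "M (\<sigma> *\<^sub>R inv M v) = M (z - w)"
      unfolding v_def L_def using sp by (simp add: M_scale[OF M] M_inv[OF M] M_diff[OF M] algebra_simps)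
    then have "\<sigma> *\<^sub>R inv M v = z - w" by (rule M_inj[OF M])
    then have "z = w + \<sigma> *\<^sub>R inv M v" by simp
    then show ?thesis using w unfolding v_def by blast
  qed
  have uniq: "w1 = w2" if P1: "?P w1" and P2: "?P w2" for w1 w2
  proof -
    obtain v1 where v1: "v1 \<in> T w1" "z = w1 + \<sigma> *\<^sub>R inv M v1" using P1 by blast
    obtain v2 where v2: "v2 \<in> T w2" "z = w2 + \<sigma> *\<^sub>R inv M v2" using P2 by blast
    have e1: "\<sigma> *\<^sub>R v1 = M (z - w1)" using PM[OF v1] by simp
    have e2: "\<sigma> *\<^sub>R v2 = M (z - w2)" using PM[OF v2] by simp
    have "0 \<le> (w1 - w2) \<bullet> (v1 - v2)" by (rule mono[OF v1(1) v2(1)])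
    then have "0 \<le> \<sigma> * ((w1 - w2) \<bullet> (v1 - v2))" using sp by simp
    also have "\<sigma> * ((w1 - w2) \<bullet> (v1 - v2)) = (w1 - w2) \<bullet> (\<sigma> *\<^sub>R v1 - \<sigma> *\<^sub>R v2)"
      by (simp add: algebra_simps)
    also have "\<dots> = - ((w1 - w2) \<bullet> M (w1 - w2))"
      unfolding e1 e2 by (simp add: M_diff[OF M] algebra_simps inner_diff_right)
    finally have "(w1 - w2) \<bullet> M (w1 - w2) \<le> 0" by simp
    then show ?thesis using M_pos[OF M, of "w1 - w2"] by (cases "w1 - w2 = 0") auto
  qed
  have "?P (resolvent T M \<sigma> z)"
    unfolding resolvent_def by (rule theI') (use ex uniq in blast)
  then obtain v where "v \<in> T (resolvent T M \<sigma> z)" "z = resolvent T M \<sigma> z + \<sigma> *\<^sub>R inv M v" by blast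
  then show ?thesis using PM by blast
qed

lemma real_case1:
  fixes \<gamma> \<sigma> \<kappa> :: real
  assumes g: "0 < \<gamma>" "\<gamma> \<le> 1" and s: "0 < \<sigma>" and k: "0 < \<kappa>"
  shows "(1 - \<gamma>) + \<gamma> * (\<kappa> / sqrt (\<sigma>\<^sup>2 + \<kappa>\<^sup>2)) \<le> sqrt (1 - \<gamma> * \<sigma>\<^sup>2 / (\<sigma>\<^sup>2 + \<kappa>\<^sup>2))"
proof -
  define R where "R = sqrt (\<sigma>\<^sup>2 + \<kappa>\<^sup>2)"
  have Rp: "0 < R" unfolding R_def using s by (simp add: add_pos_nonneg)
  have R2: "R\<^sup>2 = \<sigma>\<^sup>2 + \<kappa>\<^sup>2" unfolding R_def by (simp add: add_nonneg_nonneg)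
  define t where "t = \<kappa> / R"
  have t0: "0 \<le> t" unfolding t_def using k Rp by simp
  have st: "\<sigma>\<^sup>2 / (\<sigma>\<^sup>2 + \<kappa>\<^sup>2) = 1 - t\<^sup>2"
    unfolding t_def R2[symmetric] using Rp s by (simp add: field_simps R2 power_divide)
  have lhs0: "0 \<le> (1 - \<gamma>) + \<gamma> * t" using g t0 by simp
  have "((1 - \<gamma>) + \<gamma> * t)\<^sup>2 \<le> 1 - \<gamma> * (1 - t\<^sup>2)"
  proof -
    have "1 - \<gamma> * (1 - t\<^sup>2) - ((1 - \<gamma>) + \<gamma> * t)\<^sup>2 = \<gamma> * (1 - \<gamma>) * (1 - t)\<^sup>2"
      by (simp add: power2_eq_square algebra_simps)
    moreover have "0 \<le> \<gamma> * (1 - \<gamma>) * (1 - t)\<^sup>2" using g by simp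
    ultimately show ?thesis by linarith
  qed
  then have "(1 - \<gamma>) + \<gamma> * t \<le> sqrt (1 - \<gamma> * (1 - t\<^sup>2))" by (rule real_le_rsqrt)
  moreover have "\<gamma> * \<sigma>\<^sup>2 / (\<sigma>\<^sup>2 + \<kappa>\<^sup>2) = \<gamma> * (1 - t\<^sup>2)" using st by (simp add: times_divide_eq_right[symmetric])
  ultimately show ?thesis unfolding t_def R_def by simp
qed

lemma real_case2:
  fixes \<gamma> \<sigma> \<kappa> b e A :: real
  assumes s: "0 < \<sigma>" and k: "0 < \<kappa>" and gg: "0 \<le> g" "g \<le> 1"
    and i: "b\<^sup>2 * \<sigma>\<^sup>2 \<le> \<kappa>\<^sup>2 * e\<^sup>2" and ii: "b\<^sup>2 \<le> A\<^sup>2 - e\<^sup>2"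
  shows "b\<^sup>2 + g * e\<^sup>2 \<le> A\<^sup>2 * (1 - (1 - g) * \<sigma>\<^sup>2 / (\<sigma>\<^sup>2 + \<kappa>\<^sup>2))"
proof -
  define R2 where "R2 = \<sigma>\<^sup>2 + \<kappa>\<^sup>2"
  have Rp: "0 < R2" unfolding R2_def using s by (simp add: add_pos_nonneg)
  have h1: "(1 - g) * (b\<^sup>2 * \<sigma>\<^sup>2) \<le> (1 - g) * (\<kappa>\<^sup>2 * e\<^sup>2)" using i gg by (intro mult_left_mono) auto
  have h2: "((1 - g) * \<kappa>\<^sup>2) * b\<^sup>2 \<le> ((1 - g) * \<kappa>\<^sup>2) * (A\<^sup>2 - e\<^sup>2)" using ii gg by (intro mult_left_mono) auto
  have h3: "(g * R2) * b\<^sup>2 \<le> (g * R2) * (A\<^sup>2 - e\<^sup>2)" using ii gg Rp by (intro mult_left_mono) auto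
  have "(b\<^sup>2 + g * e\<^sup>2) * R2 \<le> A\<^sup>2 * (\<kappa>\<^sup>2 + g * \<sigma>\<^sup>2)"
    using h1 h2 h3 unfolding R2_def by (simp add: algebra_simps)
  moreover have "A\<^sup>2 * (1 - (1 - g) * \<sigma>\<^sup>2 / (\<sigma>\<^sup>2 + \<kappa>\<^sup>2)) = A\<^sup>2 * (\<kappa>\<^sup>2 + g * \<sigma>\<^sup>2) / R2"
  proof -
    have "(\<kappa>\<^sup>2 + g * \<sigma>\<^sup>2) / R2 = (R2 - (1 - g) * \<sigma>\<^sup>2) / R2" unfolding R2_def by (simp add: algebra_simps)
    also have "\<dots> = 1 - (1 - g) * \<sigma>\<^sup>2 / R2" using Rp by (simp add: diff_divide_distrib)
    finally show ?thesis unfolding R2_def by (metis times_divide_eq_right)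
  qed
  ultimately show ?thesis using Rp by (simp add: le_divide_eq)
qed

lemma real_case1b:
  fixes b e A :: real
  assumes s: "0 < \<sigma>" and k: "0 < \<kappa>" and i: "b\<^sup>2 * \<sigma>\<^sup>2 \<le> \<kappa>\<^sup>2 * e\<^sup>2" and ii: "b\<^sup>2 \<le> A\<^sup>2 - e\<^sup>2"
    and b0: "0 \<le> b" and A0: "0 \<le> A"
  shows "b \<le> \<kappa> / sqrt (\<sigma>\<^sup>2 + \<kappa>\<^sup>2) * A"
proof -
  have Rp: "0 < \<sigma>\<^sup>2 + \<kappa>\<^sup>2" using s by (simp add: add_pos_nonneg)
  have h: "b\<^sup>2 * (\<sigma>\<^sup>2 + \<kappa>\<^sup>2) \<le> \<kappa>\<^sup>2 * A\<^sup>2"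
  proof -
    have "\<kappa>\<^sup>2 * b\<^sup>2 \<le> \<kappa>\<^sup>2 * (A\<^sup>2 - e\<^sup>2)" using ii by (intro mult_left_mono) auto
    then show ?thesis using i by (simp add: algebra_simps)
  qed
  have eq: "(\<kappa> / sqrt (\<sigma>\<^sup>2 + \<kappa>\<^sup>2) * A)\<^sup>2 = \<kappa>\<^sup>2 * A\<^sup>2 / (\<sigma>\<^sup>2 + \<kappa>\<^sup>2)"
    using Rp by (simp add: power_mult_distrib power_divide)
  have "b\<^sup>2 \<le> \<kappa>\<^sup>2 * A\<^sup>2 / (\<sigma>\<^sup>2 + \<kappa>\<^sup>2)" using h Rp by (simp add: le_divide_eq)
  then have sq: "b\<^sup>2 \<le> (\<kappa> / sqrt (\<sigma>\<^sup>2 + \<kappa>\<^sup>2) * A)\<^sup>2" using eq by simp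
  have nn: "0 \<le> \<kappa> / sqrt (\<sigma>\<^sup>2 + \<kappa>\<^sup>2) * A" using A0 k by simp
  show ?thesis using power2_le_imp_le[OF sq nn] .
qed

lemma real_final:
  fixes \<gamma> \<sigma> \<kappa> :: real
  assumes g: "0 < \<gamma>" "\<gamma> < 2" and s: "0 < \<sigma>" and k: "0 < \<kappa>"
  shows "\<gamma> \<le> sqrt (1 - min \<gamma> (2 * \<gamma> - \<gamma>\<^sup>2) * \<sigma>\<^sup>2 / (\<sigma>\<^sup>2 + \<kappa>\<^sup>2)) + (min \<gamma> 1 * \<kappa> / sqrt (\<sigma>\<^sup>2 + \<kappa>\<^sup>2) + 1)"
proof (cases "\<gamma> \<le> 1")
  case True
  have "0 \<le> min \<gamma> 1 * \<kappa> / sqrt (\<sigma>\<^sup>2 + \<kappa>\<^sup>2)" using g k by simp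
  moreover have "0 \<le> sqrt (1 - min \<gamma> (2 * \<gamma> - \<gamma>\<^sup>2) * \<sigma>\<^sup>2 / (\<sigma>\<^sup>2 + \<kappa>\<^sup>2))"
  proof -
    have X: "0 < \<sigma>\<^sup>2 + \<kappa>\<^sup>2" using s by (simp add: add_pos_nonneg)
    have m1: "min \<gamma> (2 * \<gamma> - \<gamma>\<^sup>2) \<le> 1" using True by linarith
    have f1: "\<sigma>\<^sup>2 / (\<sigma>\<^sup>2 + \<kappa>\<^sup>2) \<le> 1" using X by (simp add: divide_le_eq_1)
    have f0: "0 \<le> \<sigma>\<^sup>2 / (\<sigma>\<^sup>2 + \<kappa>\<^sup>2)" by simp
    have "min \<gamma> (2 * \<gamma> - \<gamma>\<^sup>2) * (\<sigma>\<^sup>2 / (\<sigma>\<^sup>2 + \<kappa>\<^sup>2)) \<le> 1 * 1"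
      by (rule mult_mono[OF m1 f1 zero_le_one f0])
    then have "0 \<le> 1 - min \<gamma> (2 * \<gamma> - \<gamma>\<^sup>2) * \<sigma>\<^sup>2 / (\<sigma>\<^sup>2 + \<kappa>\<^sup>2)"
      by (simp only: times_divide_eq_right[symmetric])
    then show ?thesis by simp
  qed
  ultimately show ?thesis using True by linarith
next
  case False
  define X where "X = \<sigma>\<^sup>2 + \<kappa>\<^sup>2"
  define R where "R = sqrt X"
  have Xp: "0 < X" unfolding X_def using s by (simp add: add_pos_nonneg)
  have Rp: "0 < R" unfolding R_def using Xp by simp
  have R2: "R\<^sup>2 = X" unfolding R_def using Xp by simp
  have mn1: "min \<gamma> (2 * \<gamma> - \<gamma>\<^sup>2) = 2 * \<gamma> - \<gamma>\<^sup>2"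
  proof -
    have "2 * \<gamma> - \<gamma>\<^sup>2 \<le> \<gamma>" using False by (simp add: power2_eq_square)
    then show ?thesis by simp
  qed
  have mn2: "min \<gamma> 1 = 1" using False by simp
  have num: "(\<gamma> - 1)\<^sup>2 * \<sigma>\<^sup>2 + \<kappa>\<^sup>2 = X - (2 * \<gamma> - \<gamma>\<^sup>2) * \<sigma>\<^sup>2"
    unfolding X_def by (simp add: power2_eq_square algebra_simps)
  have eq1: "1 - (2 * \<gamma> - \<gamma>\<^sup>2) * \<sigma>\<^sup>2 / X = ((\<gamma> - 1)\<^sup>2 * \<sigma>\<^sup>2 + \<kappa>\<^sup>2) / R\<^sup>2"
    unfolding num R2 using Xp by (simp add: diff_divide_distrib)
  have "((\<gamma> - 1) * \<sigma> / R)\<^sup>2 \<le> 1 - (2 * \<gamma> - \<gamma>\<^sup>2) * \<sigma>\<^sup>2 / X"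
  proof -
    have "((\<gamma> - 1) * \<sigma> / R)\<^sup>2 = ((\<gamma> - 1)\<^sup>2 * \<sigma>\<^sup>2) / R\<^sup>2" by (simp add: power_mult_distrib power_divide)
    moreover have "((\<gamma> - 1)\<^sup>2 * \<sigma>\<^sup>2) / R\<^sup>2 \<le> ((\<gamma> - 1)\<^sup>2 * \<sigma>\<^sup>2 + \<kappa>\<^sup>2) / R\<^sup>2"
      using Rp by (intro divide_right_mono) auto
    ultimately show ?thesis unfolding eq1 by simp
  qed
  then have S: "(\<gamma> - 1) * \<sigma> / R \<le> sqrt (1 - (2 * \<gamma> - \<gamma>\<^sup>2) * \<sigma>\<^sup>2 / X)" by (rule real_le_rsqrt)
  have "R \<le> \<sigma> + \<kappa>" unfolding R_def X_def
  proof (rule real_le_lsqrt)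
    show "0 \<le> \<sigma> + \<kappa>" using s k by simp
    have "0 \<le> 2 * \<sigma> * \<kappa>" using s k by simp
    then show "\<sigma>\<^sup>2 + \<kappa>\<^sup>2 \<le> (\<sigma> + \<kappa>)\<^sup>2" by (simp add: power2_sum)
  qed
  then have "(\<gamma> - 1) * R \<le> (\<gamma> - 1) * (\<sigma> + \<kappa>)" using False by (intro mult_left_mono) auto
  moreover have "(\<gamma> - 1) * \<kappa> \<le> 1 * \<kappa>" using g k by (intro mult_right_mono) auto
  ultimately have "(\<gamma> - 1) * R \<le> (\<gamma> - 1) * \<sigma> + \<kappa>" by (simp add: algebra_simps)
  then have "((\<gamma> - 1) * R) / R \<le> ((\<gamma> - 1) * \<sigma> + \<kappa>) / R" using Rp by (intro divide_right_mono) auto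
  then have "\<gamma> - 1 \<le> (\<gamma> - 1) * \<sigma> / R + \<kappa> / R" using Rp by (simp add: add_divide_distrib)
  then show ?thesis using S mn1 mn2 unfolding R_def X_def by simp
qed

lemma q_comb:
  fixes M :: "'a::euclidean_space \<Rightarrow> 'a"
  assumes M: "self_adjoint_pd M"
  shows "((1 - g) *\<^sub>R a + g *\<^sub>R b) \<bullet> M ((1 - g) *\<^sub>R a + g *\<^sub>R b)
    = (1 - g) * (a \<bullet> M a) + g * (b \<bullet> M b) - g * (1 - g) * ((a - b) \<bullet> M (a - b))"
proof -
  have s: "b \<bullet> M a = a \<bullet> M b" using M_sym[OF M, of b a] by (simp add: inner_commute)
  show ?thesis
    by (simp add: M_add[OF M] M_scale[OF M] M_diff[OF M] inner_add_left inner_add_right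
        inner_diff_left inner_diff_right s algebra_simps power2_eq_square)
qed

lemma zeros_closed_convex:
  fixes T :: "'a::euclidean_space \<Rightarrow> 'a set"
  assumes mm: "maximal_monotone T"
  shows "closed (zeros T)" "convex (zeros T)"
proof -
  have mono: "\<And>x y u v. u \<in> T x \<Longrightarrow> v \<in> T y \<Longrightarrow> 0 \<le> (x - y) \<bullet> (u - v)"
    using mm unfolding maximal_monotone_def monotone_op_def by blast
  define H where "H p = {x. 0 \<le> (x - fst p) \<bullet> (0 - snd p)}" for p :: "'a \<times> 'a"
  have eq: "zeros T = (\<Inter>p\<in>{(y, v). v \<in> T y}. H p)"
  proof
    show "zeros T \<subseteq> (\<Inter>p\<in>{(y, v). v \<in> T y}. H p)"
    proof
      fix x assume x: "x \<in> zeros T"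
      have "x \<in> H (y, v)" if "v \<in> T y" for y v
        using mono[OF _ that, of 0 x] x unfolding zeros_def H_def by simp
      then show "x \<in> (\<Inter>p\<in>{(y, v). v \<in> T y}. H p)" by auto
    qed
    show "(\<Inter>p\<in>{(y, v). v \<in> T y}. H p) \<subseteq> zeros T"
    proof
      fix x assume "x \<in> (\<Inter>p\<in>{(y, v). v \<in> T y}. H p)"
      then have "\<forall>y v. v \<in> T y \<longrightarrow> 0 \<le> (x - y) \<bullet> (0 - v)" unfolding H_def by auto
      then show "x \<in> zeros T" using mm unfolding maximal_monotone_def zeros_def by blast
    qed
  qed
  have "closed (H p)" for p unfolding H_def by (intro closed_Collect_le continuous_intros)
  then show "closed (zeros T)" unfolding eq by (intro closed_INT) auto
  have "convex (H p)" for p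
  proof (rule convexI)
    fix x y u v assume h: "x \<in> H p" "y \<in> H p" "0 \<le> u" "0 \<le> (v::real)" "u + v = 1"
    have "(u *\<^sub>R x + v *\<^sub>R y - fst p) \<bullet> (0 - snd p) = u * ((x - fst p) \<bullet> (0 - snd p)) + v * ((y - fst p) \<bullet> (0 - snd p))"
    proof -
      have "u *\<^sub>R x + v *\<^sub>R y - fst p = u *\<^sub>R (x - fst p) + v *\<^sub>R (y - fst p)"
        using h(5) by (simp add: algebra_simps scaleR_add_left[symmetric])
      then show ?thesis by (simp add: inner_add_left)
    qed
    moreover have "0 \<le> u * ((x - fst p) \<bullet> (0 - snd p)) + v * ((y - fst p) \<bullet> (0 - snd p))"
      using h unfolding H_def by (intro add_nonneg_nonneg mult_nonneg_nonneg) auto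
    ultimately show "u *\<^sub>R x + v *\<^sub>R y \<in> H p" unfolding H_def by simp
  qed
  then show "convex (zeros T)" unfolding eq by (intro convex_INT) auto
qed

lemma distM_le:
  fixes M :: "'a::euclidean_space \<Rightarrow> 'a"
  assumes M: "self_adjoint_pd M" and "w \<in> D"
  shows "distM M z D \<le> normM M (w - z)"
  unfolding distM_def
  by (rule cINF_lower[OF _ assms(2)]) (rule bdd_belowI[of _ 0], auto simp: normM_nonneg[OF M])

lemma distM_ge:
  assumes "D \<noteq> {}" "\<And>w. w \<in> D \<Longrightarrow> a \<le> normM M (w - z)"
  shows "a \<le> distM M z D"
  unfolding distM_def by (rule cINF_greatest) (use assms in auto)

lemma normM_M:
  fixes M :: "'a::euclidean_space \<Rightarrow> 'a"
  assumes M: "self_adjoint_pd M" and Mle: "\<And>x. x \<bullet> M x \<le> x \<bullet> x"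
  shows "norm (M x) \<le> normM M x"
proof -
  have "(norm (M x))\<^sup>2 = x \<bullet> M (M x)" using M_sym[OF M, of x "M x"] by (simp add: dot_square_norm[symmetric])
  also have "\<dots> \<le> normM M x * normM M (M x)"
  proof -
    have "(x \<bullet> M (M x))\<^sup>2 \<le> (normM M x * normM M (M x))\<^sup>2"
      using M_cs[OF M, of x "M x"] by (simp add: power_mult_distrib normM_sq[OF M])
    then show ?thesis using normM_nonneg[OF M, of x] normM_nonneg[OF M, of "M x"]
      by (smt (verit) real_sqrt_abs real_sqrt_le_iff mult_nonneg_nonneg)
  qed
  also have "\<dots> \<le> normM M x * norm (M x)"
  proof -
    have "(normM M (M x))\<^sup>2 \<le> (norm (M x))\<^sup>2" using Mle[of "M x"] by (simp add: normM_sq[OF M] dot_square_norm)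
    then have "normM M (M x) \<le> norm (M x)" by (rule power2_le_imp_le) simp
    then show ?thesis using normM_nonneg[OF M, of x] by (simp add: mult_left_mono)
  qed
  finally have "norm (M x) * norm (M x) \<le> normM M x * norm (M x)" by (simp add: power2_eq_square)
  then show ?thesis by (cases "norm (M x) = 0") (auto simp: normM_nonneg[OF M])
qed

lemma normM_le_norm:
  fixes M :: "'a::euclidean_space \<Rightarrow> 'a"
  assumes M: "self_adjoint_pd M" and Mle: "\<And>x. x \<bullet> M x \<le> x \<bullet> x"
  shows "normM M x \<le> norm x"
proof -
  have "(normM M x)\<^sup>2 \<le> (norm x)\<^sup>2" using Mle[of x] by (simp add: normM_sq[OF M] dot_square_norm)
  then show ?thesis by (rule power2_le_imp_le) simp
qed

lemma norm_le_normM: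
  fixes M :: "'a::euclidean_space \<Rightarrow> 'a"
  assumes M: "self_adjoint_pd M" and l: "0 < l" "l \<le> 1" "\<And>x. l * (x \<bullet> x) \<le> x \<bullet> M x"
  shows "norm x \<le> normM M x / l"
proof -
  have "(l * norm x)\<^sup>2 \<le> (normM M x)\<^sup>2"
  proof -
    have "(l * norm x)\<^sup>2 = l * (l * (x \<bullet> x))" by (simp add: power2_eq_square dot_square_norm)
    also have "\<dots> \<le> 1 * (l * (x \<bullet> x))" using l by (intro mult_right_mono) auto
    also have "\<dots> \<le> (normM M x)\<^sup>2" using l(3)[of x] by (simp add: normM_sq[OF M])
    finally show ?thesis .
  qed
  then have "l * norm x \<le> normM M x" by (rule power2_le_imp_le) (simp add: normM_nonneg[OF M])
  then show ?thesis using l by (simp add: field_simps)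
qed

context
  fixes T :: "'a::euclidean_space \<Rightarrow> 'a set" and M :: "'a \<Rightarrow> 'a" and \<sigma> :: real and z p v :: 'a
  assumes mm: "maximal_monotone T" and ne: "zeros T \<noteq> {}" and M: "self_adjoint_pd M"
    and Mle: "\<And>x. x \<bullet> M x \<le> x \<bullet> x" and sp: "0 < \<sigma>"
    and pv: "v \<in> T p" and Mzp: "M (z - p) = \<sigma> *\<^sub>R v"
begin

lemma firm:
  assumes w: "w \<in> zeros T"
  shows "(normM M (z - p))\<^sup>2 + (normM M (p - w))\<^sup>2 \<le> (normM M (z - w))\<^sup>2"
proof -
  have mono: "\<And>x y u v. u \<in> T x \<Longrightarrow> v \<in> T y \<Longrightarrow> 0 \<le> (x - y) \<bullet> (u - v)"
    using mm unfolding maximal_monotone_def monotone_op_def by blast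
  have "0 \<le> (p - w) \<bullet> (v - 0)" using mono[OF pv, of 0 w] w unfolding zeros_def by simp
  then have cross: "0 \<le> (z - p) \<bullet> M (p - w)"
  proof -
    have "(z - p) \<bullet> M (p - w) = \<sigma> * (v \<bullet> (p - w))"
      using M_sym[OF M, of "z - p" "p - w"] Mzp by (simp add: inner_commute)
    moreover have "0 \<le> v \<bullet> (p - w)" using \<open>0 \<le> (p - w) \<bullet> (v - 0)\<close> by (simp add: inner_commute)
    ultimately show ?thesis using sp by simp
  qed
  have "z - w = (z - p) + (p - w)" by simp
  then have "(z - w) \<bullet> M (z - w) = (z - p) \<bullet> M (z - p) + 2 * ((z - p) \<bullet> M (p - w)) + (p - w) \<bullet> M (p - w)"
    using q_expand[OF M, of "z - p" "p - w"] by simp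
  then show ?thesis using cross by (simp add: normM_sq[OF M])
qed

lemma exact_fejer:
  assumes w: "w \<in> zeros T" and g: "0 < \<gamma>" "\<gamma> < 2"
  shows "normM M ((\<gamma> *\<^sub>R p + (1 - \<gamma>) *\<^sub>R z) - w) \<le> normM M (z - w)"
proof -
  have eq: "(\<gamma> *\<^sub>R p + (1 - \<gamma>) *\<^sub>R z) - w = (1 - \<gamma>) *\<^sub>R (z - w) + \<gamma> *\<^sub>R (p - w)"
    by (simp add: algebra_simps)
  have "(normM M ((\<gamma> *\<^sub>R p + (1 - \<gamma>) *\<^sub>R z) - w))\<^sup>2
      = (1 - \<gamma>) * (normM M (z - w))\<^sup>2 + \<gamma> * (normM M (p - w))\<^sup>2 - \<gamma> * (1 - \<gamma>) * (normM M (z - p))\<^sup>2"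
    unfolding eq normM_sq[OF M] q_comb[OF M] by simp
  also have "\<dots> \<le> (normM M (z - w))\<^sup>2"
  proof -
    have f: "\<gamma> * (normM M (p - w))\<^sup>2 \<le> \<gamma> * ((normM M (z - w))\<^sup>2 - (normM M (z - p))\<^sup>2)"
      using firm[OF w] g by (intro mult_left_mono) auto
    have "0 \<le> \<gamma> * (2 - \<gamma>) * (normM M (z - p))\<^sup>2" using g by simp
    then show ?thesis using f by (simp add: algebra_simps power2_eq_square)
  qed
  finally show ?thesis by (rule power2_le_imp_le) (simp add: normM_nonneg[OF M])
qed

end

lemma real_combine:
  fixes S P A e \<gamma> \<delta> x :: real
  assumes d: "0 \<le> \<delta>" "\<delta> < 1" and A: "0 \<le> A" and eA: "e \<le> A" and g: "0 < \<gamma>" "\<gamma> \<le> S + P"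
    and x: "(1 - \<delta>) * x \<le> \<delta> * e"
  shows "S * A + \<gamma> * x \<le> (1 / (1 - \<delta>)) * (S + \<delta> * P) * A"
proof -
  have dp: "0 < 1 - \<delta>" using d by simp
  have "(1 - \<delta>) * (\<gamma> * x) \<le> \<gamma> * (\<delta> * A)"
  proof -
    have "(1 - \<delta>) * (\<gamma> * x) = \<gamma> * ((1 - \<delta>) * x)" by simp
    also have "\<dots> \<le> \<gamma> * (\<delta> * e)" using x g by (intro mult_left_mono) auto
    also have "\<dots> \<le> \<gamma> * (\<delta> * A)" using eA d g by (intro mult_left_mono) auto
    finally show ?thesis .
  qed
  also have "\<dots> \<le> (S + P) * (\<delta> * A)" using g d A by (intro mult_right_mono) auto
  finally have h: "(1 - \<delta>) * (\<gamma> * x) \<le> (S + P) * (\<delta> * A)" .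
  have "(1 - \<delta>) * (S * A + \<gamma> * x) \<le> (S + \<delta> * P) * A"
    using h by (simp add: algebra_simps)
  then show ?thesis using dp by (simp add: field_simps)
qed

context
  fixes T :: "'a::euclidean_space \<Rightarrow> 'a set" and M :: "'a \<Rightarrow> 'a" and \<sigma> :: real and z p v :: 'a
  assumes mm: "maximal_monotone T" and ne: "zeros T \<noteq> {}" and M: "self_adjoint_pd M"
    and Mle: "\<And>x. x \<bullet> M x \<le> x \<bullet> x" and sp: "0 < \<sigma>"
    and pv: "v \<in> T p" and Mzp: "M (z - p) = \<sigma> *\<^sub>R v"
begin

lemma one_step:
  fixes \<kappa> \<gamma> \<delta> :: real and w zp :: 'a
  assumes kp: "0 < \<kappa>" and g: "0 < \<gamma>" "\<gamma> < 2" and d: "0 \<le> \<delta>" "\<delta> < 1"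
    and sub: "infdist p (zeros T) \<le> \<kappa> * infdist 0 (T p)"
    and w: "normM M (w - p) \<le> \<delta> * normM M (w - z)"
    and zp: "zp = \<gamma> *\<^sub>R w + (1 - \<gamma>) *\<^sub>R z"
  shows "distM M zp (zeros T) \<le>
     (1 / (1 - \<delta>)) *
       (sqrt (1 - min \<gamma> (2 * \<gamma> - \<gamma>\<^sup>2) * \<sigma>\<^sup>2 / (\<sigma>\<^sup>2 + \<kappa>\<^sup>2))
        + \<delta> * (min \<gamma> 1 * \<kappa> / sqrt (\<sigma>\<^sup>2 + \<kappa>\<^sup>2) + 1))
     * distM M z (zeros T)"
proof -
  define \<Omega> where "\<Omega> = zeros T"
  define S where "S = sqrt (1 - min \<gamma> (2 * \<gamma> - \<gamma>\<^sup>2) * \<sigma>\<^sup>2 / (\<sigma>\<^sup>2 + \<kappa>\<^sup>2))"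
  define Pp where "Pp = min \<gamma> 1 * \<kappa> / sqrt (\<sigma>\<^sup>2 + \<kappa>\<^sup>2) + 1"
  define \<rho> where "\<rho> = (1 / (1 - \<delta>)) * (S + \<delta> * Pp)"
  define e where "e = normM M (z - p)"
  have e0: "0 \<le> e" unfolding e_def by (rule normM_nonneg[OF M])
  have clo: "closed \<Omega>" and cvx: "convex \<Omega>" unfolding \<Omega>_def using zeros_closed_convex[OF mm] by auto
  have One: "\<Omega> \<noteq> {}" unfolding \<Omega>_def by (rule ne)
  have nv: "norm v \<le> e / \<sigma>"
  proof -
    have "\<sigma> * norm v = norm (M (z - p))" using Mzp sp by simp
    also have "\<dots> \<le> e" unfolding e_def by (rule normM_M[OF M Mle])
    finally show ?thesis using sp by (simp add: field_simps)
  qed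
  obtain w' where w': "w' \<in> \<Omega>" "infdist p \<Omega> = dist p w'" using infdist_attains_inf[OF clo One] by blast
  have b1: "normM M (p - w') \<le> \<kappa> * e / \<sigma>"
  proof -
    have "normM M (p - w') \<le> norm (p - w')" by (rule normM_le_norm[OF M Mle])
    also have "\<dots> = infdist p \<Omega>" using w' by (simp add: dist_norm)
    also have "\<dots> \<le> \<kappa> * infdist 0 (T p)" using sub unfolding \<Omega>_def .
    also have "\<dots> \<le> \<kappa> * norm v" using infdist_le[OF pv, of 0] kp by (intro mult_left_mono) auto
    also have "\<dots> \<le> \<kappa> * (e / \<sigma>)" using nv kp by (intro mult_left_mono) auto
    finally show ?thesis by simp
  qed
  have wp: "(1 - \<delta>) * normM M (w - p) \<le> \<delta> * e"
  proof -
    have "normM M (w - z) \<le> normM M (w - p) + normM M (p - z)"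
      using normM_triangle[OF M, of "w - p" "p - z"] by simp
    also have "normM M (p - z) = e" unfolding e_def by (rule normM_minus[OF M])
    finally have "\<delta> * normM M (w - z) \<le> \<delta> * (normM M (w - p) + e)" using d by (intro mult_left_mono) auto
    then show ?thesis using w by (simp add: algebra_simps)
  qed
  define zt where "zt = \<gamma> *\<^sub>R p + (1 - \<gamma>) *\<^sub>R z"
  have zpd: "zp - u = (zt - u) + \<gamma> *\<^sub>R (w - p)" for u unfolding zp zt_def by (simp add: algebra_simps)
  have Sfin: "\<gamma> \<le> S + Pp" unfolding S_def Pp_def using real_final[OF g sp kp] by simp
  have main: "distM M zp \<Omega> \<le> \<rho> * normM M (z - u)" if u: "u \<in> \<Omega>" for u
  proof -
    define A where "A = normM M (z - u)"
    have A0: "0 \<le> A" unfolding A_def by (rule normM_nonneg[OF M])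
    have fu: "e\<^sup>2 + (normM M (p - u))\<^sup>2 \<le> A\<^sup>2" using firm[OF mm ne M Mle sp pv Mzp, of u] u
      unfolding A_def e_def \<Omega>_def by simp
    have eA: "e \<le> A"
    proof -
      have "e\<^sup>2 \<le> A\<^sup>2" using fu by (smt (verit) zero_le_power2)
      then show ?thesis using A0 by (rule power2_le_imp_le)
    qed
    define u2 where "u2 = (if normM M (p - w') \<le> normM M (p - u) then w' else u)"
    have u2: "u2 \<in> \<Omega>" unfolding u2_def using u w' by simp
    define b where "b = normM M (p - u2)"
    have b0: "0 \<le> b" unfolding b_def by (rule normM_nonneg[OF M])
    have bk: "b \<le> \<kappa> * e / \<sigma>" unfolding b_def u2_def using b1 by auto
    have bu: "b \<le> normM M (p - u)" unfolding b_def u2_def by auto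
    have i: "b\<^sup>2 * \<sigma>\<^sup>2 \<le> \<kappa>\<^sup>2 * e\<^sup>2"
    proof -
      have "b * \<sigma> \<le> \<kappa> * e" using bk sp by (simp add: field_simps)
      then have "(b * \<sigma>)\<^sup>2 \<le> (\<kappa> * e)\<^sup>2" using b0 sp by (intro power_mono) auto
      then show ?thesis by (simp add: power_mult_distrib)
    qed
    have ii: "b\<^sup>2 \<le> A\<^sup>2 - e\<^sup>2"
    proof -
      have "b\<^sup>2 \<le> (normM M (p - u))\<^sup>2" using bu b0 by (intro power_mono) auto
      then show ?thesis using fu by simp
    qed
    have ex: "\<exists>u'\<in>\<Omega>. normM M (zt - u') \<le> S * A"
    proof (cases "\<gamma> \<le> 1")
      case True
      define u' where "u' = (1 - \<gamma>) *\<^sub>R u + \<gamma> *\<^sub>R u2"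
      have u'O: "u' \<in> \<Omega>" unfolding u'_def using convexD[OF cvx u u2, of "1 - \<gamma>" \<gamma>] True g by simp
      have "zt - u' = (1 - \<gamma>) *\<^sub>R (z - u) + \<gamma> *\<^sub>R (p - u2)" unfolding zt_def u'_def by (simp add: algebra_simps)
      then have "normM M (zt - u') \<le> normM M ((1 - \<gamma>) *\<^sub>R (z - u)) + normM M (\<gamma> *\<^sub>R (p - u2))"
        using normM_triangle[OF M] by simp
      also have "\<dots> = (1 - \<gamma>) * A + \<gamma> * b" unfolding A_def b_def normM_scale[OF M] using True g by simp
      also have "\<dots> \<le> (1 - \<gamma>) * A + \<gamma> * (\<kappa> / sqrt (\<sigma>\<^sup>2 + \<kappa>\<^sup>2) * A)"
        using real_case1b[OF sp kp i ii b0 A0] g by (intro add_left_mono mult_left_mono) auto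
      also have "\<dots> = ((1 - \<gamma>) + \<gamma> * (\<kappa> / sqrt (\<sigma>\<^sup>2 + \<kappa>\<^sup>2))) * A" by (simp add: algebra_simps)
      also have "\<dots> \<le> S * A"
      proof -
        have "min \<gamma> (2 * \<gamma> - \<gamma>\<^sup>2) = \<gamma>" using True g by (simp add: min_def power2_eq_square)
        then have "S = sqrt (1 - \<gamma> * \<sigma>\<^sup>2 / (\<sigma>\<^sup>2 + \<kappa>\<^sup>2))" unfolding S_def by simp
        then show ?thesis using real_case1[OF g(1) True sp kp] A0 by (intro mult_right_mono) auto
      qed
      finally show ?thesis using u'O by blast
    next
      case False
      define gg where "gg = (1 - \<gamma>)\<^sup>2"
      have gg0: "0 \<le> gg" "gg \<le> 1"
      proof -
        show "0 \<le> gg" unfolding gg_def by simp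
        have "(\<gamma> - 1) * (\<gamma> - 1) \<le> 1 * 1" using False g by (intro mult_mono) auto
        then show "gg \<le> 1" unfolding gg_def by (simp add: power2_eq_square algebra_simps)
      qed
      have "zt - u2 = (1 - \<gamma>) *\<^sub>R (z - u2) + \<gamma> *\<^sub>R (p - u2)" unfolding zt_def by (simp add: algebra_simps)
      then have "(normM M (zt - u2))\<^sup>2 = (1 - \<gamma>) * (normM M (z - u2))\<^sup>2 + \<gamma> * b\<^sup>2 - \<gamma> * (1 - \<gamma>) * e\<^sup>2"
        unfolding normM_sq[OF M] b_def e_def using q_comb[OF M, of \<gamma> "z - u2" "p - u2"] by simp
      also have "\<dots> \<le> (1 - \<gamma>) * (e\<^sup>2 + b\<^sup>2) + \<gamma> * b\<^sup>2 - \<gamma> * (1 - \<gamma>) * e\<^sup>2"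
      proof -
        have "e\<^sup>2 + b\<^sup>2 \<le> (normM M (z - u2))\<^sup>2" using firm[OF mm ne M Mle sp pv Mzp, of u2] u2
          unfolding e_def b_def \<Omega>_def by simp
        then have "(1 - \<gamma>) * (normM M (z - u2))\<^sup>2 \<le> (1 - \<gamma>) * (e\<^sup>2 + b\<^sup>2)" using False
          by (intro mult_left_mono_neg) auto
        then show ?thesis by simp
      qed
      also have "\<dots> = b\<^sup>2 + gg * e\<^sup>2" unfolding gg_def by (simp add: power2_eq_square algebra_simps)
      also have "\<dots> \<le> A\<^sup>2 * (1 - (1 - gg) * \<sigma>\<^sup>2 / (\<sigma>\<^sup>2 + \<kappa>\<^sup>2))" by (rule real_case2[OF sp kp gg0 i ii])
      also have "\<dots> = A\<^sup>2 * (1 - min \<gamma> (2 * \<gamma> - \<gamma>\<^sup>2) * \<sigma>\<^sup>2 / (\<sigma>\<^sup>2 + \<kappa>\<^sup>2))"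
      proof -
        have "2 * \<gamma> - \<gamma>\<^sup>2 \<le> \<gamma>" using False by (simp add: power2_eq_square)
        then have "min \<gamma> (2 * \<gamma> - \<gamma>\<^sup>2) = 1 - gg" unfolding gg_def by (simp add: min_def power2_eq_square algebra_simps)
        then show ?thesis by simp
      qed
      finally have "normM M (zt - u2) \<le> sqrt (A\<^sup>2 * (1 - min \<gamma> (2 * \<gamma> - \<gamma>\<^sup>2) * \<sigma>\<^sup>2 / (\<sigma>\<^sup>2 + \<kappa>\<^sup>2)))"
        by (rule real_le_rsqrt)
      also have "\<dots> = S * A" unfolding S_def using A0 by (simp add: real_sqrt_mult)
      finally show ?thesis using u2 by blast
    qed
    then obtain u' where u': "u' \<in> \<Omega>" "normM M (zt - u') \<le> S * A" by blast
    have "distM M zp \<Omega> \<le> normM M (u' - zp)" by (rule distM_le[OF M u'(1)])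
    also have "\<dots> = normM M (zp - u')" by (rule normM_minus[OF M])
    also have "\<dots> \<le> normM M (zt - u') + normM M (\<gamma> *\<^sub>R (w - p))" unfolding zpd by (rule normM_triangle[OF M])
    also have "\<dots> = normM M (zt - u') + \<gamma> * normM M (w - p)" using g by (simp add: normM_scale[OF M])
    also have "\<dots> \<le> S * A + \<gamma> * normM M (w - p)" using u'(2) by simp
    also have "\<dots> \<le> \<rho> * A" unfolding \<rho>_def by (rule real_combine[OF d A0 eA g(1) Sfin wp])
    finally show ?thesis unfolding A_def .
  qed
  have "distM M zp \<Omega> \<le> \<rho> * distM M z \<Omega>"
  proof (cases "\<rho> \<le> 0")
    case True
    obtain u where u: "u \<in> \<Omega>" using One by blast
    have "distM M z \<Omega> \<le> normM M (u - z)" by (rule distM_le[OF M u])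
    then have "\<rho> * normM M (u - z) \<le> \<rho> * distM M z \<Omega>" using True by (intro mult_left_mono_neg) auto
    then show ?thesis using main[OF u] normM_minus[OF M, of z u] by simp
  next
    case False
    then have rp: "0 < \<rho>" by simp
    have "distM M zp \<Omega> / \<rho> \<le> distM M z \<Omega>"
    proof (rule distM_ge[OF One])
      fix u assume uO: "u \<in> \<Omega>"
      have "distM M zp \<Omega> \<le> \<rho> * normM M (u - z)" using main[OF uO] normM_minus[OF M, of z u] by simp
      then show "distM M zp \<Omega> / \<rho> \<le> normM M (u - z)" using rp by (simp add: field_simps)
    qed
    then show ?thesis using rp by (simp add: field_simps)
  qed
  then show ?thesis unfolding \<rho>_def S_def Pp_def \<Omega>_def by simp
qed

end

theorem theorem2:
  fixes T :: "'a::euclidean_space \<Rightarrow> 'a set"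
    and M :: "'a \<Rightarrow> 'a"
    and z :: "nat \<Rightarrow> 'a"
    and \<sigma> \<eta> \<delta> :: "nat \<Rightarrow> real"
    and \<gamma> r \<kappa> :: real
    and zbar0 :: 'a
  assumes T_mm: "maximal_monotone T"
    and Omega_ne: "zeros T \<noteq> {}"
    and M_sapd: "self_adjoint_pd M"
    and M_max: "lambda_max M = 1"
    and nonneg: "\<And>k. 0 \<le> \<sigma> k" "\<And>k. 0 \<le> \<eta> k" "\<And>k. 0 \<le> \<delta> k"
    and eta_sum: "summable \<eta>"
    and sigma_inf: "\<exists>c>0. \<forall>k. c \<le> \<sigma> k"
    and delta_sup: "\<exists>c<1. \<forall>k. \<delta> k \<le> c"
    and gamma: "0 < \<gamma>" "\<gamma> < 2"
    and iter: "\<And>k. IGPPAstep T (z k) (\<sigma> k) (\<eta> k) (\<delta> k) \<gamma> M (z (Suc k))"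
    and bms: "bounded_metric_subregular T"
    and zbar0: "zbar0 \<in> zeros T" "normM M (zbar0 - z 0) = distM M (z 0) (zeros T)"
    and r: "0 < r"
      "norm zbar0 + (1 / lambda_min M) * (distM M (z 0) (zeros T) + \<gamma> * (\<Sum>k. \<eta> k)) \<le> r"
    and kappa: "0 < \<kappa>"
      "\<And>x. norm x \<le> r \<Longrightarrow> T x \<noteq> {} \<Longrightarrow> infdist x (zeros T) \<le> \<kappa> * infdist 0 (T x)"
  shows "\<forall>k. distM M (z (Suc k)) (zeros T) \<le>
     (1 / (1 - \<delta> k)) *
       (sqrt (1 - min \<gamma> (2 * \<gamma> - \<gamma>\<^sup>2) * (\<sigma> k)\<^sup>2 / ((\<sigma> k)\<^sup>2 + \<kappa>\<^sup>2))
        + \<delta> k * (min \<gamma> 1 * \<kappa> / sqrt ((\<sigma> k)\<^sup>2 + \<kappa>\<^sup>2) + 1))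
     * distM M (z k) (zeros T)"
proof
  fix k0 :: nat
  note M = M_sapd
  define lm where "lm = lambda_min M"
  have lm: "0 < lm" "lm \<le> 1" "\<And>x. lm * (x \<bullet> x) \<le> x \<bullet> M x"
    unfolding lm_def using lambda_facts[OF M M_max] by auto
  have Mle: "\<And>x. x \<bullet> M x \<le> x \<bullet> x" using lambda_facts[OF M M_max] by auto
  have sp: "0 < \<sigma> k" for k using sigma_inf by (meson less_le_trans)
  have dl: "\<delta> k < 1" for k using delta_sup by (meson le_less_trans)
  define p where "p k = resolvent T M (\<sigma> k) (z k)" for k
  have "\<forall>k. \<exists>v. v \<in> T (p k) \<and> M (z k - p k) = \<sigma> k *\<^sub>R v"
    unfolding p_def using resolvent_prop[OF T_mm Omega_ne M sp] by blast
  then obtain V where V: "\<And>k. V k \<in> T (p k)" "\<And>k. M (z k - p k) = \<sigma> k *\<^sub>R V k" by metis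
  have "\<forall>k. \<exists>w. z (Suc k) = \<gamma> *\<^sub>R w + (1 - \<gamma>) *\<^sub>R z k \<and>
          normM M (w - p k) \<le> min (\<eta> k) (\<delta> k * normM M (w - z k))"
    using iter unfolding IGPPAstep_def p_def by blast
  then obtain W where W: "\<And>k. z (Suc k) = \<gamma> *\<^sub>R W k + (1 - \<gamma>) *\<^sub>R z k"
     "\<And>k. normM M (W k - p k) \<le> min (\<eta> k) (\<delta> k * normM M (W k - z k))" by metis
  define D where "D = distM M (z 0) (zeros T)"
  have bnd: "normM M (z k - zbar0) \<le> D + \<gamma> * (\<Sum>j<k. \<eta> j)" for k
  proof (induction k)
    case 0
    then show ?case unfolding D_def using zbar0(2) normM_minus[OF M, of "z 0" zbar0] by simp
  next
    case (Suc k)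
    have eq: "z (Suc k) - zbar0 = ((\<gamma> *\<^sub>R p k + (1 - \<gamma>) *\<^sub>R z k) - zbar0) + \<gamma> *\<^sub>R (W k - p k)"
      using W(1)[of k] by (simp add: algebra_simps)
    have "normM M (z (Suc k) - zbar0) \<le> normM M ((\<gamma> *\<^sub>R p k + (1 - \<gamma>) *\<^sub>R z k) - zbar0) + normM M (\<gamma> *\<^sub>R (W k - p k))"
      unfolding eq by (rule normM_triangle[OF M])
    also have "\<dots> \<le> normM M (z k - zbar0) + \<gamma> * \<eta> k"
    proof -
      have "normM M ((\<gamma> *\<^sub>R p k + (1 - \<gamma>) *\<^sub>R z k) - zbar0) \<le> normM M (z k - zbar0)"
        by (rule exact_fejer[OF T_mm Omega_ne M Mle sp V(1) V(2) zbar0(1) gamma])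
      moreover have "normM M (\<gamma> *\<^sub>R (W k - p k)) \<le> \<gamma> * \<eta> k"
        using W(2)[of k] gamma by (simp add: normM_scale[OF M])
      ultimately show ?thesis by simp
    qed
    also have "\<dots> \<le> D + \<gamma> * (\<Sum>j<Suc k. \<eta> j)" using Suc.IH by (simp add: algebra_simps)
    finally show ?case .
  qed
  have pbnd: "norm (p k) \<le> r" for k
  proof -
    have "(normM M (z k - p k))\<^sup>2 + (normM M (p k - zbar0))\<^sup>2 \<le> (normM M (z k - zbar0))\<^sup>2"
      by (rule firm[OF T_mm Omega_ne M Mle sp V(1) V(2) zbar0(1)])
    then have "(normM M (p k - zbar0))\<^sup>2 \<le> (normM M (z k - zbar0))\<^sup>2" by (smt (verit) zero_le_power2)
    then have h1: "normM M (p k - zbar0) \<le> normM M (z k - zbar0)"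
      by (rule power2_le_imp_le) (simp add: normM_nonneg[OF M])
    have "(\<Sum>j<k. \<eta> j) \<le> (\<Sum>j. \<eta> j)" by (rule sum_le_suminf[OF eta_sum]) (auto simp: nonneg)
    then have "\<gamma> * (\<Sum>j<k. \<eta> j) \<le> \<gamma> * (\<Sum>j. \<eta> j)" using gamma by (intro mult_left_mono) auto
    then have h2: "normM M (p k - zbar0) \<le> D + \<gamma> * (\<Sum>j. \<eta> j)"
      using h1 bnd[of k] by linarith
    have "norm (p k) \<le> norm zbar0 + norm (p k - zbar0)" by (metis norm_triangle_sub add.commute)
    also have "norm (p k - zbar0) \<le> normM M (p k - zbar0) / lm" by (rule norm_le_normM[OF M lm])
    also have "\<dots> \<le> (D + \<gamma> * (\<Sum>j. \<eta> j)) / lm" using h2 lm by (intro divide_right_mono) auto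
    finally show ?thesis using r(2) unfolding D_def lm_def by simp
  qed
  have sub: "infdist (p k0) (zeros T) \<le> \<kappa> * infdist 0 (T (p k0))"
    using kappa(2)[OF pbnd] V(1) by blast
  have w: "normM M (W k0 - p k0) \<le> \<delta> k0 * normM M (W k0 - z k0)" using W(2)[of k0] by simp
  show "distM M (z (Suc k0)) (zeros T) \<le>
     (1 / (1 - \<delta> k0)) *
       (sqrt (1 - min \<gamma> (2 * \<gamma> - \<gamma>\<^sup>2) * (\<sigma> k0)\<^sup>2 / ((\<sigma> k0)\<^sup>2 + \<kappa>\<^sup>2))
        + \<delta> k0 * (min \<gamma> 1 * \<kappa> / sqrt ((\<sigma> k0)\<^sup>2 + \<kappa>\<^sup>2) + 1))
     * distM M (z k0) (zeros T)"
    by (rule one_step[OF T_mm Omega_ne M Mle sp V(1) V(2) kappa(1) gamma nonneg(3) dl sub w W(1)])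
qed

end
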